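(* Let $f:\mathbb{R}^n\to\mathbb{R}$ be twice differentiable with $\mu I\preceq \nabla^2 f(x)\preceq L I$ for all $x$ (where $0<\mu\le L$), and strongly self-concordant with constant $M\ge 0$. Let $\kappa=L/\mu$. Run the SR1 method with correction strategy: choose $x_0\in\mathbb{R}^n$, set $G_0=L\cdot I$, $r_{-1}=0$, and for $k=0,1,2,\dots$ set $x_{k+1}=x_k-G_k^{-1}\nabla f(x_k)$, $u_k=x_{k+1}-x_k$, $r_k=\|u_k\|_{x_k}$, $\widetilde G_k=\left(1+\frac{Mr_{k-1}}{2}\right)\left(1+\frac{Mr_k}{2}\right)G_k$, $J_k=\int_0^1\nabla^2 f(x_k+tu_k)\,dt$, and $G_{k+1}=\mathrm{SR1}(J_k,\widetilde G_k,u_k)$. Suppose the initial point satisfies $M\lambda_f(x_0)\le \frac{\ln(3/2)}{4\kappa}$. Then for all $k\ge 1$, $$\lambda_f(x_k)\le\left(e^{\frac{2n\ln(e\kappa)}{k}}-1\right)^{k/2}\sqrt{3\kappa}\cdot\lambda_f(x_0).$$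
   Context: $f$ is strongly self-concordant with constant $M\ge0$ if $\nabla^2 f(y)-\nabla^2 f(x)\preceq M\|y-x\|_z\nabla^2 f(w)$ for all $x,y,z,w\in\mathbb{R}^n$, where $\|u\|_x=\sqrt{u^\top\nabla^2 f(x)u}$ is the local norm. $\lambda_f(x)=\langle\nabla f(x),[\nabla^2 f(x)]^{-1}\nabla f(x)\rangle^{1/2}$. $\preceq$ is the Loewner order. For symmetric positive definite $A,G$ and $u\neq 0$, the SR1 update is $\mathrm{SR1}(A,G,u)=G$ if $(G-A)u=0$, and otherwise $\mathrm{SR1}(A,G,u)=G-\frac{(G-A)uu^\top(G-A)}{u^\top(G-A)u}$. *)

theory Defs
  imports "HOL-Analysis.Analysis"
begin

definition loewner_le :: "real^'n^'n \<Rightarrow> real^'n^'n \<Rightarrow> bool" where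
  "loewner_le A B \<longleftrightarrow> (\<forall>v::real^'n. v \<bullet> (A *v v) \<le> v \<bullet> (B *v v))"

definition outer :: "real^'n \<Rightarrow> real^'n \<Rightarrow> real^'n^'n" where
  "outer u v = (\<chi> i j. u $ i * v $ j)"

definition local_norm :: "(real^'n \<Rightarrow> real^'n^'n) \<Rightarrow> real^'n \<Rightarrow> real^'n \<Rightarrow> real" where
  "local_norm H x u = sqrt (u \<bullet> (H x *v u))"

definition newton_decr :: "(real^'n \<Rightarrow> real^'n) \<Rightarrow> (real^'n \<Rightarrow> real^'n^'n) \<Rightarrow> real^'n \<Rightarrow> real" where
  "newton_decr g H x = sqrt (g x \<bullet> (matrix_inv (H x) *v g x))"

definition strongly_self_concordant :: "(real^'n \<Rightarrow> real^'n^'n) \<Rightarrow> real \<Rightarrow> bool" where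
  "strongly_self_concordant H M \<longleftrightarrow> M \<ge> 0 \<and>
     (\<forall>x y z w. loewner_le (H y - H x) ((M * local_norm H z (y - x)) *\<^sub>R H w))"

definition SR1 :: "real^'n^'n \<Rightarrow> real^'n^'n \<Rightarrow> real^'n \<Rightarrow> real^'n^'n" where
  "SR1 A G u = (if (G - A) *v u = 0 then G
     else G - (1 / (u \<bullet> ((G - A) *v u))) *\<^sub>R ((G - A) ** outer u u ** (G - A)))"

end

theory Submission
  imports Defs "HOL-Analysis.Analysis"
begin


definition qf :: "real^'n^'n \<Rightarrow> real^'n \<Rightarrow> real" where
  "qf A v = v \<bullet> (A *v v)"

definition symm :: "real^'n^'n \<Rightarrow> bool" where
  "symm A \<longleftrightarrow> (\<forall>i j. A$i$j = A$j$i)"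

definition dq :: "real^'n^'n \<Rightarrow> real^'n \<Rightarrow> real" where
  "dq A z = z \<bullet> (matrix_inv A *v z)"

definition pdm :: "real \<Rightarrow> real^'n^'n \<Rightarrow> bool" where
  "pdm m A \<longleftrightarrow> symm A \<and> 0 < m \<and> (\<forall>v. m * (v \<bullet> v) \<le> qf A v)"

lemma symm_dot: "symm A \<Longrightarrow> x \<bullet> (A *v y) = y \<bullet> (A *v x)"
  unfolding symm_def inner_vec_def matrix_vector_mult_def
  apply (simp add: sum_distrib_left)
  apply (subst sum.swap)
  apply (auto intro!: sum.cong simp: mult_ac)
  done

lemma dot_symm: "(\<And>x y. x \<bullet> (A *v y) = y \<bullet> (A *v x)) \<Longrightarrow> symm A"
  unfolding symm_def
proof (intro allI)
  fix i j
  assume h: "\<And>x y. x \<bullet> (A *v y) = y \<bullet> (A *v x)"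
  have e: "\<And>i j. axis i 1 \<bullet> (A *v axis j 1) = A$i$j"
    by (simp add: matrix_vector_mult_basis inner_axis' column_def)
  show "A$i$j = A$j$i" using h[of "axis i 1" "axis j 1"] by (simp add: e)
qed

lemma symm_add[simp]: "symm A \<Longrightarrow> symm B \<Longrightarrow> symm (A + B)"
  and symm_diff[simp]: "symm A \<Longrightarrow> symm B \<Longrightarrow> symm (A - B)"
  and symm_scale[simp]: "symm A \<Longrightarrow> symm (c *\<^sub>R A)"
  and symm_mat1[simp]: "symm (mat 1)"
  by (auto simp: symm_def mat_def)

lemma qf_add[simp]: "qf (A + B) v = qf A v + qf B v"
  and qf_diff[simp]: "qf (A - B) v = qf A v - qf B v"
  and qf_scale[simp]: "qf (c *\<^sub>R A) v = c * qf A v"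
  and qf_mat1[simp]: "qf (mat 1) v = v \<bullet> v"
  by (auto simp: qf_def matrix_vector_mult_add_rdistrib matrix_vector_mult_diff_rdistrib
     inner_add_right inner_diff_right scaleR_matrix_vector_assoc[symmetric])

lemma qf_vadd: "symm A \<Longrightarrow> qf A (x + y) = qf A x + 2 * (x \<bullet> (A *v y)) + qf A y"
  unfolding qf_def
  by (simp add: matrix_vector_right_distrib inner_add_left inner_add_right symm_dot[of A y x])

lemma qf_vdiff: "symm A \<Longrightarrow> qf A (x - y) = qf A x - 2 * (x \<bullet> (A *v y)) + qf A y"
  unfolding qf_def
  by (simp add: matrix_vector_mult_diff_distrib inner_diff_left inner_diff_right symm_dot[of A y x])

lemma qf_vscale[simp]: "qf A (c *\<^sub>R x) = c^2 * qf A x"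
  unfolding qf_def by (simp add: matrix_vector_mult_scaleR power2_eq_square)

lemma qf_neg[simp]: "qf A (- x) = qf A x"
  unfolding qf_def by (simp add: vec.neg)

lemma CS_psd:
  assumes s: "symm A" and p: "\<And>v. 0 \<le> qf A v"
  shows "(x \<bullet> (A *v y))^2 \<le> qf A x * qf A y"
proof -
  let ?b = "x \<bullet> (A *v y)"
  have q: "\<And>t. 0 \<le> qf A x + 2 * t * ?b + t^2 * qf A y"
  proof -
    fix t
    have "0 \<le> qf A (x + t *\<^sub>R y)" by (rule p)
    also have "\<dots> = qf A x + 2 * t * ?b + t^2 * qf A y"
      using qf_vadd[OF s, of x "t *\<^sub>R y"]
      by (simp add: matrix_vector_mult_scaleR)
    finally show "0 \<le> qf A x + 2 * t * ?b + t^2 * qf A y" .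
  qed
  show ?thesis
  proof (cases "qf A y = 0")
    case True
    have "?b = 0"
    proof (rule ccontr)
      assume nz: "?b \<noteq> 0"
      have "0 \<le> qf A x + 2 * (- (qf A x + 1) / (2 * ?b)) * ?b"
        using q[of "- (qf A x + 1) / (2 * ?b)"] True by simp
      also have "\<dots> = -1" using nz by (simp add: field_simps)
      finally show False by simp
    qed
    then show ?thesis using True by simp
  next
    case False
    then have pos: "qf A y > 0" using p[of y] by simp
    have "0 \<le> qf A x + 2 * (- ?b / qf A y) * ?b + (- ?b / qf A y)^2 * qf A y"
      by (rule q)
    also have "\<dots> = qf A x - ?b^2 / qf A y"
      using pos by (simp add: field_simps power2_eq_square)
    finally have "?b^2 / qf A y \<le> qf A x" by simp
    then show ?thesis using pos by (simp add: field_simps)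
  qed
qed

lemma CS_psd_abs:
  assumes s: "symm A" and p: "\<And>v. 0 \<le> qf A v"
  shows "\<bar>x \<bullet> (A *v y)\<bar> \<le> sqrt (qf A x) * sqrt (qf A y)"
proof -
  have "\<bar>x \<bullet> (A *v y)\<bar> = sqrt ((x \<bullet> (A *v y))^2)" by simp
  also have "\<dots> \<le> sqrt (qf A x * qf A y)" using CS_psd[OF s p] real_sqrt_le_mono by blast
  also have "\<dots> = sqrt (qf A x) * sqrt (qf A y)" by (simp add: real_sqrt_mult)
  finally show ?thesis .
qed

lemma tri_psd:
  assumes s: "symm A" and p: "\<And>v. 0 \<le> qf A v"
  shows "sqrt (qf A (x + y)) \<le> sqrt (qf A x) + sqrt (qf A y)"
proof -
  have "qf A (x + y) \<le> (sqrt (qf A x) + sqrt (qf A y))^2"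
  proof -
    have "qf A (x + y) = qf A x + 2 * (x \<bullet> (A *v y)) + qf A y" by (rule qf_vadd[OF s])
    also have "\<dots> \<le> qf A x + 2 * (sqrt (qf A x) * sqrt (qf A y)) + qf A y"
      using CS_psd_abs[OF s p, of x y] by linarith
    also have "\<dots> = (sqrt (qf A x) + sqrt (qf A y))^2"
      using p[of x] p[of y] by (simp add: power2_eq_square algebra_simps)
    finally show ?thesis .
  qed
  then have "sqrt (qf A (x + y)) \<le> sqrt ((sqrt (qf A x) + sqrt (qf A y))^2)"
    using real_sqrt_le_mono by blast
  also have "\<dots> = sqrt (qf A x) + sqrt (qf A y)" using p[of x] p[of y] by simp
  finally show ?thesis .
qed

lemma pdm_psd: "pdm m A \<Longrightarrow> 0 \<le> qf A v"
  unfolding pdm_def by (meson mult_nonneg_nonneg inner_ge_zero less_imp_le order_trans)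

lemma pdm_invertible:
  assumes "pdm m A" shows "invertible A"
proof -
  have "inj ((*v) A)"
    unfolding vec.inj_iff_eq_0
  proof (intro allI impI)
    fix x assume "A *v x = 0"
    then have "qf A x = 0" by (simp add: qf_def)
    then have "m * (x \<bullet> x) \<le> 0" using assms unfolding pdm_def by metis
    then have "x \<bullet> x \<le> 0" using assms unfolding pdm_def by (simp add: mult_le_0_iff)
    then show "x = 0" by (metis inner_eq_zero_iff inner_ge_zero antisym)
  qed
  then show ?thesis
    using matrix_left_invertible_injective invertible_left_inverse by blast
qed

lemma inv_props:
  assumes "invertible A"
  shows "A ** matrix_inv A = mat 1" "matrix_inv A ** A = mat 1"
proof -
  have "\<exists>A'. A ** A' = mat 1 \<and> A' ** A = mat 1" using assms unfolding invertible_def by auto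
  then have "A ** matrix_inv A = mat 1 \<and> matrix_inv A ** A = mat 1"
    unfolding matrix_inv_def by (rule someI_ex)
  then show "A ** matrix_inv A = mat 1" "matrix_inv A ** A = mat 1" by auto
qed

lemma inv_mv[simp]:
  assumes "invertible A"
  shows "A *v (matrix_inv A *v z) = z" "matrix_inv A *v (A *v z) = z"
  using inv_props[OF assms] by (simp_all add: matrix_vector_mul_assoc)

lemma inv_unique:
  assumes "invertible A" "A ** B = mat 1"
  shows "matrix_inv A = B"
proof -
  have "matrix_inv A = matrix_inv A ** (A ** B)" using assms(2) by (simp add: matrix_mul_rid)
  also have "\<dots> = (matrix_inv A ** A) ** B" by (simp add: matrix_mul_assoc)
  finally have "matrix_inv A = (matrix_inv A ** A) ** B" .
  then show ?thesis using inv_props(2)[OF assms(1)] by simp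
qed

lemma inv_symm:
  assumes s: "symm A" and i: "invertible A"
  shows "symm (matrix_inv A)"
proof (rule dot_symm)
  fix x y
  let ?B = "matrix_inv A"
  have "x \<bullet> (?B *v y) = (A *v (?B *v x)) \<bullet> (?B *v y)" using i by simp
  also have "\<dots> = (?B *v y) \<bullet> (A *v (?B *v x))" by (simp add: inner_commute)
  also have "\<dots> = (?B *v x) \<bullet> (A *v (?B *v y))" by (rule symm_dot[OF s])
  also have "\<dots> = y \<bullet> (?B *v x)" using i by (simp add: inner_commute)
  finally show "x \<bullet> (?B *v y) = y \<bullet> (?B *v x)" .
qed

lemma dq_qf:
  assumes "pdm m A" shows "dq A z = qf A (matrix_inv A *v z)"
proof -
  have i: "invertible A" by (rule pdm_invertible[OF assms])
  show ?thesis unfolding dq_def qf_def using i by (simp add: inner_commute)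
qed

lemma dq_A:
  assumes "pdm m A" shows "dq A (A *v p) = qf A p"
proof -
  have i: "invertible A" by (rule pdm_invertible[OF assms])
  show ?thesis unfolding dq_def qf_def using i by (simp add: inner_commute)
qed

lemma dq_nonneg: "pdm m A \<Longrightarrow> 0 \<le> dq A z"
  using dq_qf pdm_psd by metis

lemma dual_CS:
  assumes a: "pdm m A" shows "z \<bullet> p \<le> sqrt (dq A z) * sqrt (qf A p)"
proof -
  have i: "invertible A" by (rule pdm_invertible[OF assms])
  have s: "symm A" using a by (simp add: pdm_def)
  let ?q = "matrix_inv A *v z"
  have "z \<bullet> p = (A *v ?q) \<bullet> p" using i by simp
  also have "\<dots> = p \<bullet> (A *v ?q)" by (simp add: inner_commute)
  also have "\<dots> \<le> sqrt (qf A p) * sqrt (qf A ?q)"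
    using CS_psd_abs[OF s pdm_psd[OF a], of p ?q] by linarith
  also have "\<dots> = sqrt (dq A z) * sqrt (qf A p)" by (simp add: dq_qf[OF a])
  finally show ?thesis .
qed

lemma dq_tri:
  assumes a: "pdm m A" shows "sqrt (dq A (z + w)) \<le> sqrt (dq A z) + sqrt (dq A w)"
proof -
  have s: "symm A" using a by (simp add: pdm_def)
  show ?thesis
    using tri_psd[OF s pdm_psd[OF a], of "matrix_inv A *v z" "matrix_inv A *v w"]
    by (simp add: dq_qf[OF a] matrix_vector_right_distrib)
qed

lemma dq_scale_vec[simp]: "dq A (c *\<^sub>R z) = c^2 * dq A z"
  unfolding dq_def by (simp add: matrix_vector_mult_scaleR power2_eq_square)

lemma dq_neg[simp]: "dq A (- z) = dq A z"
  unfolding dq_def by (simp add: vec.neg)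

lemma dq_mono:
  assumes a: "pdm m A" and b: "pdm m' B" and le: "\<And>v. qf A v \<le> qf B v"
  shows "dq B z \<le> dq A z"
proof -
  let ?p = "matrix_inv B *v z"
  have "dq B z = z \<bullet> ?p" by (simp add: dq_def)
  also have "\<dots> \<le> sqrt (dq A z) * sqrt (qf A ?p)" by (rule dual_CS[OF a])
  also have "\<dots> \<le> sqrt (dq A z) * sqrt (qf B ?p)"
    by (intro mult_left_mono real_sqrt_le_mono le) (simp add: dq_nonneg[OF a])
  also have "\<dots> = sqrt (dq A z) * sqrt (dq B z)" by (simp add: dq_qf[OF b])
  finally have h: "dq B z \<le> sqrt (dq A z) * sqrt (dq B z)" .
  have nb: "0 \<le> dq B z" by (rule dq_nonneg[OF b])
  have na: "0 \<le> dq A z" by (rule dq_nonneg[OF a])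
  show ?thesis
  proof (cases "dq B z = 0")
    case True then show ?thesis using na by simp
  next
    case False
    then have "sqrt (dq B z) > 0" using nb by simp
    moreover have "sqrt (dq B z) * sqrt (dq B z) \<le> sqrt (dq A z) * sqrt (dq B z)"
    proof -
      have "sqrt (dq B z) * sqrt (dq B z) = dq B z" using nb by simp
      then show ?thesis using h by linarith
    qed
    ultimately have "sqrt (dq B z) \<le> sqrt (dq A z)" by (meson mult_right_le_imp_le)
    then show ?thesis by simp
  qed
qed

lemma pdm_scale: "pdm m A \<Longrightarrow> 0 < c \<Longrightarrow> pdm (c * m) (c *\<^sub>R A)"
  unfolding pdm_def by (auto simp: mult.assoc)

lemma pdm_mono_le: "pdm m A \<Longrightarrow> 0 < m' \<Longrightarrow> m' \<le> m \<Longrightarrow> pdm m' A"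
  unfolding pdm_def by (meson inner_ge_zero mult_right_mono order_trans)

lemma dq_scale_mat:
  assumes a: "pdm m A" and c: "0 < c"
  shows "dq (c *\<^sub>R A) z = dq A z / c"
proof -
  have i: "invertible A" by (rule pdm_invertible[OF a])
  have ic: "invertible (c *\<^sub>R A)" using scalar_invertible[OF _ i, of c] c by simp
  have "(c *\<^sub>R A) ** ((1/c) *\<^sub>R matrix_inv A) = mat 1"
    using c inv_props(1)[OF i] by (simp add: matrix_scalar_ac scalar_matrix_assoc[symmetric])
  then have "matrix_inv (c *\<^sub>R A) = (1/c) *\<^sub>R matrix_inv A" by (rule inv_unique[OF ic])
  then show ?thesis unfolding dq_def by (simp add: scaleR_matrix_vector_assoc[symmetric])
qed

lemma bilin_bound:
  assumes Q: "pdm m Q" and D: "symm D" and al: "0 \<le> \<alpha>" and be: "0 \<le> \<beta>"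
    and lo: "\<And>x. - \<alpha> * qf Q x \<le> qf D x" and up: "\<And>x. qf D x \<le> \<beta> * qf Q x"
  shows "\<bar>x \<bullet> (D *v y)\<bar> \<le> max \<alpha> \<beta> * (sqrt (qf Q x) * sqrt (qf Q y))"
proof -
  let ?g = "max \<alpha> \<beta>"
  have sQ: "symm Q" using Q by (simp add: pdm_def)
  have ab: "\<And>v. \<bar>qf D v\<bar> \<le> ?g * qf Q v"
  proof -
    fix v
    have "0 \<le> qf Q v" by (rule pdm_psd[OF Q])
    then have "\<alpha> * qf Q v \<le> ?g * qf Q v" "\<beta> * qf Q v \<le> ?g * qf Q v"
      by (simp_all add: mult_right_mono)
    then show "\<bar>qf D v\<bar> \<le> ?g * qf Q v" using lo[of v] up[of v] by (simp add: abs_le_iff)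
  qed
  have key: "\<And>t. t > 0 \<Longrightarrow> 4 * \<bar>x \<bullet> (D *v y)\<bar> \<le> ?g * (2 * (t^2 * qf Q x + qf Q y / t^2))"
  proof -
    fix t :: real assume t: "t > 0"
    let ?a = "t *\<^sub>R x" and ?b = "(1/t) *\<^sub>R y"
    have ab_eq: "?a \<bullet> (D *v ?b) = x \<bullet> (D *v y)"
      using t by (simp add: matrix_vector_mult_scaleR)
    have e1: "qf D (?a + ?b) - qf D (?a - ?b) = 4 * (x \<bullet> (D *v y))"
      using qf_vadd[OF D, of ?a ?b] qf_vdiff[OF D, of ?a ?b] ab_eq by simp
    have e2: "qf Q (?a + ?b) + qf Q (?a - ?b) = 2 * (t^2 * qf Q x + qf Q y / t^2)"
      using qf_vadd[OF sQ, of ?a ?b] qf_vdiff[OF sQ, of ?a ?b] t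
      by (simp add: power_divide field_simps)
    have "4 * \<bar>x \<bullet> (D *v y)\<bar> \<le> \<bar>qf D (?a + ?b)\<bar> + \<bar>qf D (?a - ?b)\<bar>"
      using e1 by linarith
    also have "\<dots> \<le> ?g * qf Q (?a + ?b) + ?g * qf Q (?a - ?b)"
      using ab[of "?a + ?b"] ab[of "?a - ?b"] by linarith
    also have "\<dots> = ?g * (2 * (t^2 * qf Q x + qf Q y / t^2))"
      using e2 by (simp add: distrib_left[symmetric])
    finally show "4 * \<bar>x \<bullet> (D *v y)\<bar> \<le> ?g * (2 * (t^2 * qf Q x + qf Q y / t^2))" .
  qed
  show ?thesis
  proof (cases "x = 0 \<or> y = 0")
    case True then show ?thesis
      using pdm_psd[OF Q] by (auto simp: qf_def)
  next
    case False
    have px: "qf Q x > 0"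
    proof -
      have "m * (x \<bullet> x) \<le> qf Q x" using Q by (simp add: pdm_def)
      moreover have "m * (x \<bullet> x) > 0" using Q False by (simp add: pdm_def)
      ultimately show ?thesis by simp
    qed
    have py: "qf Q y > 0"
    proof -
      have "m * (y \<bullet> y) \<le> qf Q y" using Q by (simp add: pdm_def)
      moreover have "m * (y \<bullet> y) > 0" using Q False by (simp add: pdm_def)
      ultimately show ?thesis by simp
    qed
    define t where "t = sqrt (sqrt (qf Q y) / sqrt (qf Q x))"
    have t: "t > 0" using px py by (simp add: t_def)
    have t2: "t^2 = sqrt (qf Q y) / sqrt (qf Q x)" using px py by (simp add: t_def)
    have sx: "sqrt (qf Q x) > 0" using px by simp
    have sy: "sqrt (qf Q y) > 0" using py by simp
    have s1: "t^2 * qf Q x = sqrt (qf Q x) * sqrt (qf Q y)"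
    proof -
      have "t^2 * qf Q x = sqrt (qf Q y) / sqrt (qf Q x) * (sqrt (qf Q x) * sqrt (qf Q x))"
        using px by (simp add: t2)
      also have "\<dots> = sqrt (qf Q x) * sqrt (qf Q y)" using sx by (simp add: field_simps)
      finally show ?thesis .
    qed
    have s2: "qf Q y / t^2 = sqrt (qf Q x) * sqrt (qf Q y)"
    proof -
      have "qf Q y / t^2 = (sqrt (qf Q y) * sqrt (qf Q y)) / (sqrt (qf Q y) / sqrt (qf Q x))"
        using py by (simp add: t2)
      also have "\<dots> = sqrt (qf Q x) * sqrt (qf Q y)" using sx sy by (simp add: field_simps)
      finally show ?thesis .
    qed
    have "?g * (2 * (t^2 * qf Q x + qf Q y / t^2)) = 4 * (?g * (sqrt (qf Q x) * sqrt (qf Q y)))"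
      unfolding s1 s2 by (simp add: algebra_simps)
    then have "4 * \<bar>x \<bullet> (D *v y)\<bar> \<le> 4 * (?g * (sqrt (qf Q x) * sqrt (qf Q y)))"
      using key[OF t] by linarith
    then show ?thesis by linarith
  qed
qed


lemma mm_add_r: "(A + B) ** (C::real^'n^'n) = A ** C + B ** C"
  by (simp add: matrix_matrix_mult_def vec_eq_iff distrib_right sum.distrib)
lemma mm_diff_r: "(A - B) ** (C::real^'n^'n) = A ** C - B ** C"
  by (simp add: matrix_matrix_mult_def vec_eq_iff left_diff_distrib sum_subtractf)
lemma mm_diff_l: "(C::real^'n^'n) ** (A - B) = C ** A - C ** B"
  by (simp add: matrix_matrix_mult_def vec_eq_iff right_diff_distrib sum_subtractf)
lemma mm_scale_l: "(c *\<^sub>R A) ** (B::real^'n^'n) = c *\<^sub>R (A ** B)"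
  by (simp add: scalar_matrix_assoc)
lemma mm_scale_r: "A ** (c *\<^sub>R (B::real^'n^'n)) = c *\<^sub>R (A ** B)"
  by (simp add: matrix_scalar_ac scalar_matrix_assoc)

lemma outer_mv: "outer a b *v v = (b \<bullet> v) *\<^sub>R a"
  by (simp add: outer_def matrix_vector_mult_def vec_eq_iff inner_vec_def sum_distrib_left mult_ac)

lemma mat_outer: "A ** outer a b = outer (A *v a) b"
  apply (simp add: outer_def matrix_matrix_mult_def matrix_vector_mult_def vec_eq_iff sum_distrib_right)
  apply (auto intro!: sum.cong)
  done

lemma outer_mat: "outer a b ** A = outer a (transpose A *v b)"
  apply (simp add: outer_def matrix_matrix_mult_def matrix_vector_mult_def vec_eq_iff sum_distrib_left
      transpose_def)
  apply (auto intro!: sum.cong)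
  done

lemma transpose_axis: "transpose (A::real^'n^'n) *v axis j 1 = A $ j"
  by (simp add: vec_eq_iff transpose_def matrix_vector_mult_def axis_def if_distrib[of "(*) _"] cong: if_cong)

lemma outer_neg: "outer (- a) b = - outer a b"
  by (simp add: outer_def vec_eq_iff)

lemma outer_scale: "outer (c *\<^sub>R a) b = c *\<^sub>R outer a b"
  by (simp add: outer_def vec_eq_iff mult_ac)

lemma outer_zero2: "outer a 0 = 0"
  by (simp add: outer_def vec_eq_iff)

lemma mat1_rows: "(\<chi> i. axis i (1::real)) = mat 1"
  by (simp add: vec_eq_iff mat_def axis_def)

lemma det_row_replace:
  fixes y :: "real^'n"
  shows "det (\<chi> i. if i = j then y else axis i 1) = y $ j"
proof -
  let ?A = "(\<chi> i. if i = j then y else axis i 1) :: real^'n^'n"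
  let ?x = "- (\<Sum>i\<in>UNIV - {j}. y$i *s axis i (1::real))"
  have rows: "\<And>i. row i ?A = (if i = j then y else axis i 1)" by (simp add: row_def)
  have sp: "?x \<in> vec.span {row i ?A |i. i \<noteq> j}"
  proof -
    have "(\<Sum>i\<in>UNIV - {j}. y$i *s axis i (1::real)) \<in> vec.span {row i ?A |i. i \<noteq> j}"
    proof (rule vec.span_sum)
      fix i assume "i \<in> UNIV - {j}"
      then have "axis i 1 \<in> {row i ?A |i. i \<noteq> j}" using rows by force
      then show "y$i *s axis i (1::real) \<in> vec.span {row i ?A |i. i \<noteq> j}"
        by (simp add: vec.span_base vec.span_scale)
    qed
    then show ?thesis by (rule vec.span_neg)
  qed
  have d1: "det (\<chi> k. if k = j then row j ?A + ?x else row k ?A) = det ?A"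
    by (rule det_row_span[OF sp])
  have e1: "row j ?A + ?x = y$j *s axis j 1"
  proof -
    have "y = (\<Sum>i\<in>UNIV. y$i *s axis i (1::real))"
      by (simp add: vec_eq_iff axis_def if_distrib[of "(*) _"] cong: if_cong)
    also have "\<dots> = y$j *s axis j 1 + (\<Sum>i\<in>UNIV - {j}. y$i *s axis i (1::real))"
      by (simp add: sum.remove[of UNIV j])
    finally show ?thesis using rows by (simp add: algebra_simps)
  qed
  have d2: "det (\<chi> k. if k = j then y$j *s axis j (1::real) else row k ?A) = y$j"
  proof -
    have "det (\<chi> k. if k = j then y$j *s axis j (1::real) else row k ?A)
        = y$j * det (\<chi> k. if k = j then axis j (1::real) else row k ?A)"
      by (rule det_row_mul)
    moreover have "(\<chi> k. if k = j then axis j (1::real) else row k ?A) = mat 1"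
      using rows by (simp add: vec_eq_iff mat_def axis_def)
    ultimately show ?thesis by simp
  qed
  show ?thesis using d1 d2 unfolding e1 by simp
qed

lemma det_col_update:
  fixes x :: "real^'n"
  shows "det (mat 1 + outer x (axis j 1)) = 1 + x $ j"
proof -
  have "transpose (mat 1 + outer x (axis j 1)) = (\<chi> i. if i = j then axis j 1 + x else axis i 1)"
    by (simp add: vec_eq_iff transpose_def mat_def outer_def axis_def)
  then have "det (mat 1 + outer x (axis j 1)) = (axis j 1 + x) $ j"
    by (metis det_transpose det_row_replace)
  then show ?thesis by simp
qed

lemma MDL:
  fixes x y :: "real^'n"
  shows "det (mat 1 + outer x y) = 1 + x \<bullet> y"
proof (cases "y = 0")
  case True then show ?thesis by (simp add: outer_zero2)
next
  case False
  then obtain j where yj: "y $ j \<noteq> 0" by (auto simp: vec_eq_iff)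
  let ?Y = "(\<chi> i. if i = j then y else axis i 1) :: real^'n^'n"
  have dY: "det ?Y = y $ j" by (rule det_row_replace)
  have tY: "transpose ?Y *v axis j 1 = y"
    using transpose_axis[of ?Y j] by simp
  have tY': "axis j 1 v* ?Y = y" using tY by simp
  have "?Y ** (mat 1 + outer x y) = (mat 1 + outer (?Y *v x) (axis j 1)) ** ?Y"
    by (simp add: matrix_add_ldistrib mm_add_r mat_outer outer_mat tY')
  then have "det (?Y ** (mat 1 + outer x y)) = det ((mat 1 + outer (?Y *v x) (axis j 1)) ** ?Y)"
    by simp
  then have "det ?Y * det (mat 1 + outer x y) = det (mat 1 + outer (?Y *v x) (axis j 1)) * det ?Y"
    unfolding det_mul .
  then have "det (mat 1 + outer x y) = det (mat 1 + outer (?Y *v x) (axis j 1))"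
    using yj dY by simp
  also have "\<dots> = 1 + (?Y *v x) $ j" by (rule det_col_update)
  also have "(?Y *v x) $ j = x \<bullet> y"
    by (simp add: matrix_vector_mult_def inner_vec_def mult_ac)
  finally show ?thesis .
qed

lemma det_scaleR:
  fixes A :: "real^'n^'n"
  shows "det (c *\<^sub>R A) = c ^ CARD('n) * det A"
proof -
  have "c *\<^sub>R A = (\<chi> i. (\<lambda>_. c) i *s (\<lambda>i. A $ i) i)"
    by (simp add: vec_eq_iff)
  then have "det (c *\<^sub>R A) = prod (\<lambda>_. c) (UNIV :: 'n set) * det (\<chi> i. A $ i)"
    using det_rows_mul[of "\<lambda>_. c" "\<lambda>i. A $ i"] by simp
  then show ?thesis by simp
qed


lemma qf_axis: "qf A (axis j 1) = A $ j $ j"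
  by (simp add: qf_def matrix_vector_mult_basis inner_axis' column_def)

lemma transpose_outer: "transpose (outer a b) = outer b a"
  by (simp add: transpose_def outer_def vec_eq_iff mult.commute)

lemma transpose_diff_m: "transpose (A - B) = transpose A - (transpose (B::real^'n^'n))"
  by (simp add: transpose_def vec_eq_iff)

lemma transpose_mat1: "transpose (mat 1 :: real^'n^'n) = mat 1"
  by (simp add: transpose_def mat_def vec_eq_iff)

lemma qf_congr: "qf (E ** A ** transpose E) v = qf A (transpose E *v v)"
  unfolding qf_def
  by (simp add: matrix_vector_mul_assoc[symmetric] dot_lmul_matrix[symmetric])

lemma qf_outer_self: "qf (outer a a) v = (a \<bullet> v)^2"
  by (simp add: qf_def outer_mv power2_eq_square inner_commute)

lemma detlb_aux:
  fixes m :: real assumes m: "m > 0"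
  shows "finite S \<Longrightarrow> \<forall>A::real^'n^'n. symm A \<longrightarrow>
     (\<forall>i k. (i \<notin> S \<or> k \<notin> S) \<longrightarrow> A$i$k = (if i = k then 1 else 0)) \<longrightarrow>
     (\<forall>v. (\<forall>i. i \<notin> S \<longrightarrow> v$i = 0) \<longrightarrow> m * (v \<bullet> v) \<le> qf A v) \<longrightarrow> m ^ card S \<le> det A"
proof (induction S rule: finite_induct)
  case empty
  show ?case
  proof (intro allI impI)
    fix A :: "real^'n^'n"
    assume "\<forall>i k. (i \<notin> {} \<or> k \<notin> {}) \<longrightarrow> A$i$k = (if i = k then 1 else 0)"
    then have "A = mat 1" by (simp add: vec_eq_iff mat_def)
    then show "m ^ card {} \<le> det A" by simp
  qed
next
  case (insert j S)
  show ?case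
  proof (intro allI impI)
    fix A :: "real^'n^'n"
    assume sA: "symm A"
      and idA: "\<forall>i k. (i \<notin> insert j S \<or> k \<notin> insert j S) \<longrightarrow> A$i$k = (if i = k then 1 else 0)"
      and pA: "\<forall>v. (\<forall>i. i \<notin> insert j S \<longrightarrow> v$i = 0) \<longrightarrow> m * (v \<bullet> v) \<le> qf A v"
    define a where "a = A$j$j"
    have ax: "\<forall>i. i \<notin> insert j S \<longrightarrow> (axis j 1 :: real^'n) $ i = 0" by (auto simp: axis_def)
    have am: "m \<le> a"
    proof -
      have "m * ((axis j 1 :: real^'n) \<bullet> axis j 1) \<le> qf A (axis j 1)"
        using mp[OF spec[OF pA, of "axis j 1"] ax] .
      then show ?thesis by (simp add: qf_axis a_def inner_axis_axis)
    qed
    have apos: "a > 0" using am m by simp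
    define c :: "real^'n" where "c = (\<chi> i. if i = j then 0 else A$i$j / a)"
    have cj: "c$j = 0" by (simp add: c_def)
    have ca: "\<And>i. i \<noteq> j \<Longrightarrow> c$i * a = A$i$j" using apos by (simp add: c_def)
    have c0: "\<And>i. i \<notin> insert j S \<Longrightarrow> c$i = 0" using idA by (auto simp: c_def)
    define E :: "real^'n^'n" where "E = mat 1 - outer c (axis j 1)"
    have dE: "det E = 1"
    proof -
      have "E = mat 1 + outer (- c) (axis j 1)" by (simp add: E_def outer_neg)
      then show ?thesis using MDL[of "- c" "axis j 1"] cj by (simp add: inner_axis)
    qed
    have Eent: "\<And>i l. E$i$l = (if i = l then 1 else 0) - (if l = j then c$i else 0)"
      by (simp add: E_def mat_def outer_def axis_def)
    define B where "B = E ** A ** transpose E"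
    have dB: "det B = det A" by (simp add: B_def det_mul dE)
    have EA: "\<And>i k. (E ** A)$i$k = A$i$k - c$i * A$j$k"
      by (simp add: matrix_matrix_mult_def Eent left_diff_distrib sum_subtractf if_distrib[of "\<lambda>x. x * _"] cong: if_cong)
    have Bent: "\<And>i k. B$i$k = A$i$k - c$i * A$j$k - A$i$j * c$k + c$i * a * c$k"
    proof -
      fix i k
      have "B$i$k = (\<Sum>l\<in>UNIV. (E ** A)$i$l * E$k$l)"
        by (simp add: B_def matrix_matrix_mult_def transpose_def)
      also have "\<dots> = (E ** A)$i$k - (E ** A)$i$j * c$k"
        by (simp add: Eent right_diff_distrib sum_subtractf if_distrib[of "\<lambda>x. _ * x"] cong: if_cong)
      also have "\<dots> = A$i$k - c$i * A$j$k - A$i$j * c$k + c$i * a * c$k"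
        by (simp add: EA a_def algebra_simps)
      finally show "B$i$k = A$i$k - c$i * A$j$k - A$i$j * c$k + c$i * a * c$k" .
    qed
    have Ajk: "\<And>k. A$j$k = A$k$j" using sA by (simp add: symm_def)
    have Bj1: "\<And>k. B$j$k = (if k = j then a else 0)"
    proof -
      fix k show "B$j$k = (if k = j then a else 0)"
      proof (cases "k = j")
        case True then show ?thesis by (simp add: Bent cj a_def)
      next
        case False
        have "B$j$k = A$j$k - A$j$j * c$k" by (simp add: Bent cj)
        also have "\<dots> = 0" using ca[OF False] Ajk[of k] by (simp add: a_def mult.commute)
        finally show ?thesis using False by simp
      qed
    qed
    have Bj2: "\<And>k. B$k$j = (if k = j then a else 0)"
    proof -
      fix k show "B$k$j = (if k = j then a else 0)"
      proof (cases "k = j")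
        case True then show ?thesis by (simp add: Bent cj a_def)
      next
        case False
        have "B$k$j = A$k$j - c$k * A$j$j" by (simp add: Bent cj)
        also have "\<dots> = 0" using ca[OF False] by (simp add: a_def)
        finally show ?thesis using False by simp
      qed
    qed
    have sB: "symm B" unfolding symm_def
      using sA by (auto simp: Bent symm_def algebra_simps)
    have tEv: "\<And>v. transpose E *v v = v - (c \<bullet> v) *\<^sub>R axis j 1"
      by (simp add: E_def transpose_diff_m transpose_outer transpose_mat1
          matrix_vector_mult_diff_rdistrib outer_mv)
    define C where "C = (\<chi> i k. if i = j \<and> k = j then 1 else B$i$k)"
    have BC: "B = (\<chi> i. if i = j then a *s row j C else row i C)"
      by (auto simp: vec_eq_iff C_def row_def Bj1)
    have dBC: "det B = a * det C"
    proof -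
      have "det B = a * det (\<chi> i. if i = j then row j C else row i C)"
        unfolding BC by (rule det_row_mul)
      moreover have "(\<chi> i. if i = j then row j C else row i C) = C"
        by (simp add: vec_eq_iff row_def)
      ultimately show ?thesis by simp
    qed
    have sC: "symm C" using sB by (auto simp: symm_def C_def)
    have idC: "\<forall>i k. (i \<notin> S \<or> k \<notin> S) \<longrightarrow> C$i$k = (if i = k then 1 else 0)"
    proof (intro allI impI)
      fix i k assume ik: "i \<notin> S \<or> k \<notin> S"
      show "C$i$k = (if i = k then 1 else 0)"
      proof (cases "i = j \<or> k = j")
        case True then show ?thesis by (auto simp: C_def Bj1 Bj2)
      next
        case False
        then have ik': "i \<notin> insert j S \<or> k \<notin> insert j S" using ik by auto
        have "B$i$k = A$i$k"
        proof (cases "i \<notin> insert j S")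
          case True
          then have "c$i = 0" "A$i$j = 0" using c0 idA False by auto
          then show ?thesis by (simp add: Bent)
        next
          case False
          then have kk: "k \<notin> insert j S" using ik' by auto
          then have "c$k = 0" "A$j$k = 0" using c0 idA \<open>\<not> (i = j \<or> k = j)\<close> by auto
          then show ?thesis by (simp add: Bent)
        qed
        then show ?thesis using idA ik' False by (auto simp: C_def)
      qed
    qed
    have pC: "\<forall>v. (\<forall>i. i \<notin> S \<longrightarrow> v$i = 0) \<longrightarrow> m * (v \<bullet> v) \<le> qf C v"
    proof (intro allI impI)
      fix v :: "real^'n" assume vS: "\<forall>i. i \<notin> S \<longrightarrow> v$i = 0"
      have vj: "v$j = 0" using vS insert.hyps(2) by auto
      have CB: "C = B + (1 - a) *\<^sub>R outer (axis j 1) (axis j 1)"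
        by (auto simp: vec_eq_iff C_def outer_def axis_def Bj1)
      have qCB: "qf C v = qf B v"
        unfolding CB by (simp add: qf_outer_self inner_axis' vj)
      define w where "w = v - (c \<bullet> v) *\<^sub>R axis j (1::real)"
      have qBw: "qf B v = qf A w" unfolding B_def qf_congr tEv w_def ..
      have wS: "\<forall>i. i \<notin> insert j S \<longrightarrow> w$i = 0" using vS by (simp add: w_def axis_def)
      have ww: "v \<bullet> v \<le> w \<bullet> w"
      proof -
        have "w \<bullet> w = v \<bullet> v - 2 * (c \<bullet> v) * (v \<bullet> axis j 1) + (c \<bullet> v)^2 * (axis j 1 \<bullet> axis j (1::real))"
          by (simp add: w_def inner_diff_left inner_diff_right power2_eq_square inner_commute algebra_simps)
        also have "\<dots> = v \<bullet> v + (c \<bullet> v)^2" by (simp add: inner_axis vj)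
        finally show ?thesis by simp
      qed
      have "m * (v \<bullet> v) \<le> m * (w \<bullet> w)" using ww m by simp
      also have "\<dots> \<le> qf A w" using mp[OF spec[OF pA, of w] wS] .
      finally show "m * (v \<bullet> v) \<le> qf C v" using qCB qBw by simp
    qed
    have dC: "m ^ card S \<le> det C" using insert.IH sC idC pC by blast
    have "m ^ card (insert j S) = m * m ^ card S" using insert.hyps by simp
    also have "\<dots> \<le> a * det C"
      by (rule mult_mono[OF am dC]) (use m apos in auto)
    also have "\<dots> = det A" using dB dBC by simp
    finally show "m ^ card (insert j S) \<le> det A" .
  qed
qed

lemma detlb:
  assumes "pdm m A" shows "m ^ CARD('n) \<le> det (A::real^'n^'n)"
  using detlb_aux[of m "UNIV :: 'n set"] assms unfolding pdm_def by auto


lemma deriv_line: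
  fixes f :: "real^'n \<Rightarrow> real"
  assumes grad: "\<And>y. (f has_derivative (\<lambda>h. g y \<bullet> h)) (at y)"
  shows "DERIV (\<lambda>t. f (p + t *\<^sub>R v)) t :> g (p + t *\<^sub>R v) \<bullet> v"
proof -
  have h1: "((\<lambda>t. p + t *\<^sub>R v) has_derivative (\<lambda>h. h *\<^sub>R v)) (at t)"
    by (auto intro!: derivative_eq_intros)
  have h2: "((\<lambda>t. f (p + t *\<^sub>R v)) has_derivative (\<lambda>h. g (p + t *\<^sub>R v) \<bullet> (h *\<^sub>R v))) (at t)"
    using has_derivative_compose[OF h1 grad] by simp
  show ?thesis unfolding has_field_derivative_def
    by (rule has_derivative_eq_rhs[OF h2]) (auto simp: fun_eq_iff)
qed

lemma delta_est:
  fixes f :: "real^'n \<Rightarrow> real"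
  assumes grad: "\<And>y. (f has_derivative (\<lambda>h. g y \<bullet> h)) (at y)"
    and e: "e > 0" and d: "d > 0"
    and near: "\<And>z. norm (z - y) < d \<Longrightarrow> norm (g z - g y - D *v (z - y)) \<le> e * norm (z - y)"
    and s: "s > 0" and sd: "s * (norm v + norm w) < d"
  shows "\<bar>f (y + s *\<^sub>R v + s *\<^sub>R w) - f (y + s *\<^sub>R v) - f (y + s *\<^sub>R w) + f y - s^2 * (v \<bullet> (D *v w))\<bar>
     \<le> 2 * e * s^2 * norm v * (norm v + norm w)"
proof -
  define \<phi> where "\<phi> t = f ((y + s *\<^sub>R w) + t *\<^sub>R v) - f (y + t *\<^sub>R v)" for t
  define \<phi>' where "\<phi>' t = g ((y + s *\<^sub>R w) + t *\<^sub>R v) \<bullet> v - g (y + t *\<^sub>R v) \<bullet> v" for t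
  have der: "\<And>t. DERIV \<phi> t :> \<phi>' t"
    unfolding \<phi>_def \<phi>'_def
    by (intro DERIV_diff deriv_line[OF grad])
  obtain \<xi> where xi: "0 < \<xi>" "\<xi> < s" "\<phi> s - \<phi> 0 = (s - 0) * \<phi>' \<xi>"
    using MVT2[OF s der] by blast
  have phis: "\<phi> s - \<phi> 0 = f (y + s *\<^sub>R v + s *\<^sub>R w) - f (y + s *\<^sub>R v) - f (y + s *\<^sub>R w) + f y"
    by (simp add: \<phi>_def algebra_simps)
  define z1 where "z1 = (y + s *\<^sub>R w) + \<xi> *\<^sub>R v"
  define z2 where "z2 = y + \<xi> *\<^sub>R v"
  have nv: "norm (\<xi> *\<^sub>R v) \<le> s * norm v" using xi by (simp add: mult_right_mono)
  have n1: "norm (z1 - y) \<le> s * (norm v + norm w)"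
  proof -
    have "norm (z1 - y) = norm (\<xi> *\<^sub>R v + s *\<^sub>R w)" by (simp add: z1_def algebra_simps)
    also have "\<dots> \<le> norm (\<xi> *\<^sub>R v) + norm (s *\<^sub>R w)" by (rule norm_triangle_ineq)
    also have "\<dots> \<le> s * norm v + s * norm w" using nv s by simp
    finally show ?thesis by (simp add: algebra_simps)
  qed
  have n2: "norm (z2 - y) \<le> s * norm v" using nv by (simp add: z2_def)
  have n2': "s * norm v \<le> s * (norm v + norm w)" using s by (simp add: mult_left_mono)
  define E1 where "E1 = g z1 - g y - D *v (z1 - y)"
  define E2 where "E2 = g z2 - g y - D *v (z2 - y)"
  have e1: "norm E1 \<le> e * (s * (norm v + norm w))"
  proof -
    have "norm E1 \<le> e * norm (z1 - y)" unfolding E1_def using near n1 sd by simp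
    also have "\<dots> \<le> e * (s * (norm v + norm w))" using n1 e by simp
    finally show ?thesis .
  qed
  have e2: "norm E2 \<le> e * (s * norm v)"
  proof -
    have "norm E2 \<le> e * norm (z2 - y)" unfolding E2_def using near n2 n2' sd by simp
    also have "\<dots> \<le> e * (s * norm v)" using n2 e by simp
    finally show ?thesis .
  qed
  have z12: "z1 - z2 = s *\<^sub>R w" by (simp add: z1_def z2_def)
  have "g z1 - g z2 = E1 - E2 + D *v (z1 - z2)"
    by (simp add: E1_def E2_def matrix_vector_mult_diff_distrib algebra_simps)
  then have gz: "g z1 - g z2 = E1 - E2 + s *\<^sub>R (D *v w)"
    unfolding z12 by (simp add: matrix_vector_mult_scaleR)
  have gd: "\<phi>' \<xi> = v \<bullet> (E1 - E2) + s * (v \<bullet> (D *v w))"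
  proof -
    have "\<phi>' \<xi> = v \<bullet> (g z1 - g z2)" by (simp add: \<phi>'_def z1_def z2_def inner_diff_right inner_commute)
    then show ?thesis by (simp add: gz inner_add_right)
  qed
  have "\<bar>v \<bullet> (E1 - E2)\<bar> \<le> norm (E1 - E2) * norm v"
    using Cauchy_Schwarz_ineq2[of v "E1 - E2"] by (simp add: mult.commute)
  also have "\<dots> \<le> (norm E1 + norm E2) * norm v"
    by (intro mult_right_mono norm_triangle_ineq4) simp
  also have "\<dots> \<le> (e * (s * (norm v + norm w)) + e * (s * norm v)) * norm v"
    using e1 e2 by (intro mult_right_mono) auto
  also have "\<dots> \<le> 2 * e * s * norm v * (norm v + norm w)"
  proof -
    have "e * (s * norm v) \<le> e * (s * (norm v + norm w))" using e n2' by simp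
    then have "(e * (s * (norm v + norm w)) + e * (s * norm v)) * norm v
        \<le> (2 * (e * (s * (norm v + norm w)))) * norm v"
      by (intro mult_right_mono) auto
    then show ?thesis by (simp add: algebra_simps)
  qed
  finally have bnd: "\<bar>v \<bullet> (E1 - E2)\<bar> \<le> 2 * e * s * norm v * (norm v + norm w)" .
  have "f (y + s *\<^sub>R v + s *\<^sub>R w) - f (y + s *\<^sub>R v) - f (y + s *\<^sub>R w) + f y - s^2 * (v \<bullet> (D *v w))
      = s * (v \<bullet> (E1 - E2))"
    using xi(3) phis gd by (simp add: power2_eq_square algebra_simps)
  also have "\<bar>\<dots>\<bar> \<le> s * (2 * e * s * norm v * (norm v + norm w))"
    using bnd s by (simp add: abs_mult)
  finally show ?thesis by (simp add: power2_eq_square algebra_simps)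
qed

lemma hessian_symm:
  fixes f :: "real^'n \<Rightarrow> real"
  assumes grad: "\<And>y. (f has_derivative (\<lambda>h. g y \<bullet> h)) (at y)"
    and hess: "\<And>y. (g has_derivative (\<lambda>h. H y *v h)) (at y)"
  shows "symm (H y)"
proof (rule dot_symm)
  fix v w :: "real^'n"
  let ?D = "H y"
  let ?N = "norm v + norm w"
  show "v \<bullet> (?D *v w) = w \<bullet> (?D *v v)"
  proof (rule ccontr)
    assume ne: "v \<bullet> (?D *v w) \<noteq> w \<bullet> (?D *v v)"
    define \<delta> where "\<delta> = \<bar>v \<bullet> (?D *v w) - w \<bullet> (?D *v v)\<bar>"
    have dpos: "\<delta> > 0" using ne by (simp add: \<delta>_def)
    define e where "e = \<delta> / (4 * (?N + 1)^2)"
    have Np: "?N + 1 > 0" by (smt (verit) norm_ge_zero)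
    have epos: "e > 0" using dpos Np by (simp add: e_def)
    have hd: "bounded_linear (\<lambda>h. ?D *v h) \<and> (\<forall>e>0. \<exists>d>0. \<forall>z. norm (z - y) < d \<longrightarrow>
        norm (g z - g y - ?D *v (z - y)) \<le> e * norm (z - y))"
      using hess[of y] unfolding has_derivative_at_alt by simp
    then obtain d where d: "d > 0"
      and near: "\<And>z. norm (z - y) < d \<Longrightarrow> norm (g z - g y - ?D *v (z - y)) \<le> e * norm (z - y)"
      using epos by blast
    define K where "K = ?N + 1"
    have Kp: "K > 0" using Np by (simp add: K_def)
    define s where "s = d / (2 * K)"
    have spos: "s > 0" unfolding s_def using d Kp by simp
    have sd: "s * ?N < d"
    proof -
      have "s * ?N < s * K" using spos by (simp add: K_def)
      also have "\<dots> = d / 2" using d Kp by (simp add: s_def)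
      finally show ?thesis using d by simp
    qed
    have sd': "s * (norm w + norm v) < d" using sd by (simp add: add.commute)
    let ?\<Delta> = "f (y + s *\<^sub>R v + s *\<^sub>R w) - f (y + s *\<^sub>R v) - f (y + s *\<^sub>R w) + f y"
    have b1: "\<bar>?\<Delta> - s^2 * (v \<bullet> (?D *v w))\<bar> \<le> 2 * e * s^2 * norm v * ?N"
      by (rule delta_est[OF grad epos d near spos sd])
    have b2': "\<bar>f (y + s *\<^sub>R w + s *\<^sub>R v) - f (y + s *\<^sub>R w) - f (y + s *\<^sub>R v) + f y - s^2 * (w \<bullet> (?D *v v))\<bar>
        \<le> 2 * e * s^2 * norm w * (norm w + norm v)"
      by (rule delta_est[OF grad epos d near spos sd'])
    have b2: "\<bar>?\<Delta> - s^2 * (w \<bullet> (?D *v v))\<bar> \<le> 2 * e * s^2 * norm w * ?N"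
      using b2' by (simp add: algebra_simps)
    have "s^2 * \<delta> = \<bar>(?\<Delta> - s^2 * (w \<bullet> (?D *v v))) - (?\<Delta> - s^2 * (v \<bullet> (?D *v w)))\<bar>"
    proof -
      have "s^2 * \<delta> = \<bar>s^2 * (v \<bullet> (?D *v w) - w \<bullet> (?D *v v))\<bar>"
        by (simp add: \<delta>_def abs_mult)
      then show ?thesis by (simp add: algebra_simps)
    qed
    also have "\<dots> \<le> 2 * e * s^2 * norm w * ?N + 2 * e * s^2 * norm v * ?N"
      using b1 b2 by linarith
    also have "\<dots> = s^2 * (2 * e * ?N^2)" by (simp add: power2_eq_square algebra_simps)
    finally have "s^2 * \<delta> \<le> s^2 * (2 * e * ?N^2)" .
    then have "\<delta> \<le> 2 * e * ?N^2" using spos by simp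
    also have "\<dots> \<le> 2 * e * (?N + 1)^2"
      using epos by (intro mult_left_mono power_mono) auto
    also have "\<dots> = \<delta> / 2" using dpos Np by (simp add: e_def field_simps)
    finally show False using dpos by simp
  qed
qed


lemma ln_eq: "local_norm H z d = sqrt (qf (H z) d)"
  by (simp add: local_norm_def qf_def)

lemma ln_scale: "local_norm H z (t *\<^sub>R d) = \<bar>t\<bar> * local_norm H z d"
  by (simp add: ln_eq real_sqrt_mult)

lemma ln_neg: "local_norm H z (- d) = local_norm H z d"
  by (simp add: ln_eq)

lemma ln_nonneg:
  assumes "\<And>v. 0 \<le> qf (H z) v" shows "0 \<le> local_norm H z d"
  using assms by (simp add: ln_eq)

lemma ln_le:
  assumes "\<And>v. qf (H z) v \<le> L * (v \<bullet> v)"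
  shows "local_norm H z d \<le> sqrt L * norm d"
proof -
  have "local_norm H z d \<le> sqrt (L * (d \<bullet> d))" unfolding ln_eq using assms real_sqrt_le_mono by blast
  also have "\<dots> = sqrt L * norm d" by (simp add: real_sqrt_mult norm_eq_sqrt_inner)
  finally show ?thesis .
qed

lemma loewner_qf: "loewner_le A B \<longleftrightarrow> (\<forall>v. qf A v \<le> qf B v)"
  by (simp add: loewner_le_def qf_def)

lemma ssc_qf:
  assumes "strongly_self_concordant H M"
  shows "qf (H y) v - qf (H x) v \<le> M * local_norm H z (y - x) * qf (H w) v"
  using assms unfolding strongly_self_concordant_def loewner_qf by (simp add: mult.assoc)

lemma bl_linear: "linear (f :: real^'n^'n \<Rightarrow> 'b::euclidean_space) \<Longrightarrow> bounded_linear f"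
  using linear_conv_bounded_linear by blast

lemma bl_mv: "bounded_linear (\<lambda>A::real^'n^'n. A *v u)"
  by (rule bl_linear, rule linearI)
     (simp_all add: matrix_vector_mult_add_rdistrib scaleR_matrix_vector_assoc)

lemma bl_bil: "bounded_linear (\<lambda>A::real^'n^'n. x \<bullet> (A *v y))"
  by (rule bl_linear, rule linearI)
     (simp_all add: matrix_vector_mult_add_rdistrib scaleR_matrix_vector_assoc[symmetric] inner_add_right)

lemma bl_qf: "bounded_linear (\<lambda>A::real^'n^'n. qf A v)"
  unfolding qf_def by (rule bl_bil)

context
  fixes H :: "real^'n \<Rightarrow> real^'n^'n" and \<mu> L M :: real
  assumes sH: "\<And>y. symm (H y)"
    and lo: "\<And>y v. \<mu> * (v \<bullet> v) \<le> qf (H y) v"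
    and up: "\<And>y v. qf (H y) v \<le> L * (v \<bullet> v)"
    and mu: "0 < \<mu>" and M: "0 \<le> M"
    and ssc: "\<And>x y z w v. qf (H y) v - qf (H x) v \<le> M * local_norm H z (y - x) * qf (H w) v"
begin

lemma qfH_nonneg: "0 \<le> qf (H y) v"
  by (meson lo mu inner_ge_zero mult_nonneg_nonneg less_imp_le order_trans)

lemma L_nonneg: "0 \<le> L"
proof -
  have "\<mu> * ((axis undefined 1 :: real^'n) \<bullet> axis undefined 1) \<le> L * ((axis undefined 1 :: real^'n) \<bullet> axis undefined 1)"
    by (rule order_trans[OF lo up])
  then have "\<mu> * 1 \<le> L * 1" by (simp add: inner_axis_axis)
  then show ?thesis using mu by simp
qed

lemma diff_bound:
  "\<bar>qf (H y - H x) v\<bar> \<le> (M * sqrt L * L * norm (y - x)) * qf (mat 1) v"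
proof -
  let ?C = "M * sqrt L * L * norm (y - x)"
  have a: "qf (H y) v - qf (H x) v \<le> ?C * (v \<bullet> v)"
  proof -
    have "qf (H y) v - qf (H x) v \<le> M * local_norm H x (y - x) * qf (H x) v" by (rule ssc)
    also have "\<dots> \<le> M * (sqrt L * norm (y - x)) * (L * (v \<bullet> v))"
      by (intro mult_mono ln_le up M mult_nonneg_nonneg ln_nonneg qfH_nonneg) (auto simp: L_nonneg)
    finally show ?thesis by (simp add: mult_ac)
  qed
  have b: "qf (H x) v - qf (H y) v \<le> ?C * (v \<bullet> v)"
  proof -
    have "qf (H x) v - qf (H y) v \<le> M * local_norm H x (x - y) * qf (H x) v" by (rule ssc)
    also have "\<dots> \<le> M * (sqrt L * norm (x - y)) * (L * (v \<bullet> v))"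
      by (intro mult_mono ln_le up M mult_nonneg_nonneg ln_nonneg qfH_nonneg) (auto simp: L_nonneg)
    finally show ?thesis by (simp add: mult_ac norm_minus_commute)
  qed
  show ?thesis using a b by (simp add: abs_le_iff)
qed

lemma entry_bound: "\<bar>(H y - H x) $ i $ j\<bar> \<le> M * sqrt L * L * norm (y - x)"
proof -
  let ?C = "M * sqrt L * L * norm (y - x)"
  have C0: "0 \<le> ?C" using M L_nonneg by simp
  have Q: "pdm 1 (mat 1 :: real^'n^'n)" by (simp add: pdm_def)
  have "\<bar>axis i 1 \<bullet> ((H y - H x) *v axis j 1)\<bar> \<le> max ?C ?C * (sqrt (qf (mat 1) (axis i (1::real))) * sqrt (qf (mat 1) (axis j (1::real))))"
  proof -
    have db: "\<And>v. \<bar>qf (H y - H x) v\<bar> \<le> ?C * qf (mat 1) v" by (rule diff_bound)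
    have l1: "\<And>v. - ?C * qf (mat 1) v \<le> qf (H y - H x) v"
      using db by (metis abs_le_iff minus_le_iff mult_minus_left)
    have l2: "\<And>v. qf (H y - H x) v \<le> ?C * qf (mat 1) v" using db abs_le_iff by blast
    show ?thesis by (rule bilin_bound[OF Q symm_diff[OF sH sH] C0 C0 l1 l2])
  qed
  moreover have "axis i 1 \<bullet> ((H y - H x) *v axis j 1) = (H y - H x) $ i $ j"
    by (simp add: matrix_vector_mult_basis inner_axis' column_def)
  ultimately show ?thesis by (simp add: inner_axis_axis)
qed

lemma H_lip: "norm (H y - H x) \<le> real (CARD('n) * CARD('n)) * (M * sqrt L * L * norm (y - x))"
proof -
  let ?C = "M * sqrt L * L * norm (y - x)"
  let ?D = "H y - H x"
  have "norm ?D \<le> (\<Sum>i\<in>UNIV. norm (?D $ i))"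
    unfolding norm_vec_def by (rule L2_set_le_sum) simp
  also have "\<dots> \<le> (\<Sum>i\<in>(UNIV::'n set). \<Sum>j\<in>(UNIV::'n set). \<bar>?D $ i $ j\<bar>)"
    by (intro sum_mono norm_le_l1_cart)
  also have "\<dots> \<le> (\<Sum>i\<in>(UNIV::'n set). \<Sum>j\<in>(UNIV::'n set). ?C)"
    by (intro sum_mono entry_bound)
  also have "\<dots> = real (CARD('n) * CARD('n)) * ?C" by simp
  finally show ?thesis .
qed

lemma H_cont: "continuous_on S H"
  unfolding continuous_on_iff
proof (intro ballI allI impI)
  fix x and e :: real assume "x \<in> S" "e > 0"
  define K where "K = real (CARD('n) * CARD('n)) * (M * sqrt L * L)"
  have K0: "0 \<le> K" using M L_nonneg by (simp add: K_def)
  show "\<exists>d>0. \<forall>x'\<in>S. dist x' x < d \<longrightarrow> dist (H x') (H x) < e"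
  proof (intro exI[of _ "e / (K + 1)"] conjI ballI impI)
    show "e / (K + 1) > 0" using \<open>e > 0\<close> K0 by simp
    fix x' assume d: "dist x' x < e / (K + 1)"
    have "dist (H x') (H x) = norm (H x' - H x)" by (simp add: dist_norm)
    also have "\<dots> \<le> K * norm (x' - x)" using H_lip[of x' x] by (simp add: K_def mult_ac)
    also have "\<dots> \<le> K * (e / (K + 1))"
      using d K0 by (intro mult_left_mono) (auto simp: dist_norm)
    also have "\<dots> < e"
    proof -
      have "K * (e / (K + 1)) = e * (K / (K + 1))" by simp
      also have "\<dots> < e * 1" using \<open>e > 0\<close> K0 by (intro mult_strict_left_mono) auto
      finally show ?thesis by simp
    qed
    finally show "dist (H x') (H x) < e" .
  qed
qed

lemma Hline_cont: "continuous_on S (\<lambda>t::real. H (x + t *\<^sub>R u))"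
proof -
  have "continuous_on S (\<lambda>t::real. x + t *\<^sub>R u)" by (intro continuous_intros)
  then have "continuous_on S (H \<circ> (\<lambda>t::real. x + t *\<^sub>R u))"
    by (rule continuous_on_compose) (rule H_cont)
  then show ?thesis by (simp add: o_def)
qed

lemma Hline_int: "(\<lambda>t::real. H (x + t *\<^sub>R u)) integrable_on {0..1}"
  by (rule integrable_continuous_interval[OF Hline_cont])

lemma J_lin:
  assumes "bounded_linear h"
  shows "((\<lambda>t. h (H (x + t *\<^sub>R u))) has_integral h (integral {0..1} (\<lambda>t::real. H (x + t *\<^sub>R u)))) {0..1}"
  using has_integral_linear[OF integrable_integral[OF Hline_int] assms] by (simp add: o_def)

lemma J_qf: "((\<lambda>t. qf (H (x + t *\<^sub>R u)) v) has_integral qf (integral {0..1} (\<lambda>t::real. H (x + t *\<^sub>R u))) v) {0..1}"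
  by (rule J_lin[OF bl_qf])

lemma J_mv: "((\<lambda>t. H (x + t *\<^sub>R u) *v w) has_integral (integral {0..1} (\<lambda>t::real. H (x + t *\<^sub>R u)) *v w)) {0..1}"
  by (rule J_lin[OF bl_mv])

lemma J_symm: "symm (integral {0..1} (\<lambda>t::real. H (x + t *\<^sub>R u)))"
proof (rule dot_symm)
  fix a b :: "real^'n"
  let ?J = "integral {0..1} (\<lambda>t::real. H (x + t *\<^sub>R u))"
  have i1: "((\<lambda>t. a \<bullet> (H (x + t *\<^sub>R u) *v b)) has_integral a \<bullet> (?J *v b)) {0..1}"
    by (rule J_lin[OF bl_bil])
  have i2: "((\<lambda>t. b \<bullet> (H (x + t *\<^sub>R u) *v a)) has_integral b \<bullet> (?J *v a)) {0..1}"
    by (rule J_lin[OF bl_bil])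
  have "(\<lambda>t. a \<bullet> (H (x + t *\<^sub>R u) *v b)) = (\<lambda>t. b \<bullet> (H (x + t *\<^sub>R u) *v a))"
    using symm_dot[OF sH] by auto
  with i1 i2 show "a \<bullet> (?J *v b) = b \<bullet> (?J *v a)" by (metis has_integral_unique)
qed

lemma int_t: "((\<lambda>t::real. t) has_integral (1/2)) {0..1}"
proof -
  have "((\<lambda>t::real. t) has_integral ((\<lambda>t. t^2/2) 1 - (\<lambda>t. t^2/2) 0)) {0..1}"
    by (rule fundamental_theorem_of_calculus)
       (auto intro!: derivative_eq_intros simp: has_real_derivative_iff_has_vector_derivative[symmetric])
  then show ?thesis by simp
qed

lemma int_1mt: "((\<lambda>t::real. 1 - t) has_integral (1/2)) {0..1}"
proof -
  have "((\<lambda>t::real. 1 - t) has_integral ((1::real) - 1/2)) {0..1}"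
    using has_integral_diff[OF has_integral_const_real[of "1::real" 0 1] int_t] by simp
  then show ?thesis by simp
qed

lemma int_affine: "((\<lambda>t::real. a + b * t) has_integral (a + b / 2)) {0..1}"
  using has_integral_add[OF has_integral_const_real[of a 0 1] has_integral_mult_right[OF int_t, of b]]
  by simp

lemma JB1:
  "qf (integral {0..1} (\<lambda>t::real. H (x + t *\<^sub>R u))) v \<le> (1 + M * local_norm H x u / 2) * qf (H x) v"
proof -
  let ?r = "local_norm H x u" and ?q0 = "qf (H x) v"
  have "qf (integral {0..1} (\<lambda>t::real. H (x + t *\<^sub>R u))) v \<le> ?q0 + (M * ?r * ?q0) / 2"
  proof (rule has_integral_le[OF J_qf int_affine])
    fix t :: real assume t: "t \<in> {0..1}"
    have "qf (H (x + t *\<^sub>R u)) v - ?q0 \<le> M * local_norm H x ((x + t *\<^sub>R u) - x) * ?q0" by (rule ssc)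
    also have "\<dots> = M * ?r * ?q0 * t" using t by (simp add: ln_scale)
    finally show "qf (H (x + t *\<^sub>R u)) v \<le> ?q0 + M * ?r * ?q0 * t" by simp
  qed
  then show ?thesis by (simp add: algebra_simps)
qed

lemma JB2:
  "qf (H x) v - qf (integral {0..1} (\<lambda>t::real. H (x + t *\<^sub>R u))) v \<le> (M * local_norm H x u / 2) * qf (H x) v"
proof -
  let ?r = "local_norm H x u" and ?q0 = "qf (H x) v"
  have "?q0 + (- (M * ?r * ?q0)) / 2 \<le> qf (integral {0..1} (\<lambda>t::real. H (x + t *\<^sub>R u))) v"
  proof (rule has_integral_le[OF int_affine J_qf])
    fix t :: real assume t: "t \<in> {0..1}"
    have "?q0 - qf (H (x + t *\<^sub>R u)) v \<le> M * local_norm H x (x - (x + t *\<^sub>R u)) * ?q0" by (rule ssc)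
    also have "\<dots> = M * ?r * ?q0 * t"
    proof -
      have "x - (x + t *\<^sub>R u) = (- t) *\<^sub>R u" by simp
      then show ?thesis using t by (simp add: ln_scale ln_neg)
    qed
    finally show "?q0 + - (M * ?r * ?q0) * t \<le> qf (H (x + t *\<^sub>R u)) v" by simp
  qed
  then show ?thesis by (simp add: algebra_simps)
qed

lemma JB3:
  "qf (H (x + u)) v \<le> (1 + M * local_norm H x u / 2) * qf (integral {0..1} (\<lambda>t::real. H (x + t *\<^sub>R u))) v"
proof -
  let ?r = "local_norm H x u" and ?q1 = "qf (H (x + u)) v"
  let ?J = "integral {0..1} (\<lambda>t::real. H (x + t *\<^sub>R u))"
  have r0: "0 \<le> ?r" by (rule ln_nonneg[OF qfH_nonneg])
  have each: "?q1 - qf ?J v \<le> (M * ?r / 2) * qf (H (x + s *\<^sub>R u)) v" if s: "s \<in> {0..1}" for s :: real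
  proof -
    let ?fs = "qf (H (x + s *\<^sub>R u)) v"
    have "?q1 + (- (M * ?r * ?fs)) / 2 \<le> qf ?J v"
    proof (rule has_integral_le[OF _ J_qf])
      show "((\<lambda>t::real. (?q1 - M * ?r * ?fs) + (M * ?r * ?fs) * t) has_integral (?q1 + (- (M * ?r * ?fs)) / 2)) {0..1}"
        using int_affine[of "?q1 - M * ?r * ?fs" "M * ?r * ?fs"] by (simp add: algebra_simps)
      fix t :: real assume t: "t \<in> {0..1}"
      have "?q1 - qf (H (x + t *\<^sub>R u)) v \<le> M * local_norm H x ((x + u) - (x + t *\<^sub>R u)) * ?fs" by (rule ssc)
      also have "\<dots> = M * ?r * ?fs * (1 - t)"
      proof -
        have "(x + u) - (x + t *\<^sub>R u) = (1 - t) *\<^sub>R u" by (simp add: algebra_simps)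
        then show ?thesis using t by (simp add: ln_scale)
      qed
      finally show "(?q1 - M * ?r * ?fs) + (M * ?r * ?fs) * t \<le> qf (H (x + t *\<^sub>R u)) v"
        by (simp add: algebra_simps)
    qed
    then show ?thesis by (simp add: algebra_simps)
  qed
  have "?q1 - qf ?J v \<le> (M * ?r / 2) * qf ?J v"
  proof (rule has_integral_le[OF _ has_integral_mult_right[OF J_qf]])
    show "((\<lambda>s::real. ?q1 - qf ?J v) has_integral (?q1 - qf ?J v)) {0..1}"
      using has_integral_const_real[of "?q1 - qf ?J v" 0 1] by simp
  qed (rule each)
  then show ?thesis by (simp add: algebra_simps)
qed

end

lemma ftc_g:
  fixes g :: "real^'n \<Rightarrow> real^'n"
  assumes hess: "\<And>y. (g has_derivative (\<lambda>h. H y *v h)) (at y)"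
  shows "((\<lambda>t. H (x + t *\<^sub>R u) *v u) has_integral (g (x + u) - g x)) {0..1}"
proof -
  have "((\<lambda>t. H (x + t *\<^sub>R u) *v u) has_integral (g (x + 1 *\<^sub>R u) - g (x + 0 *\<^sub>R u))) {0..1}"
  proof (rule fundamental_theorem_of_calculus)
    fix t :: real assume "t \<in> {0..1}"
    have h1: "((\<lambda>t. x + t *\<^sub>R u) has_derivative (\<lambda>h. h *\<^sub>R u)) (at t within {0..1})"
      by (auto intro!: derivative_eq_intros)
    have h2: "((\<lambda>t. g (x + t *\<^sub>R u)) has_derivative (\<lambda>h. H (x + t *\<^sub>R u) *v (h *\<^sub>R u))) (at t within {0..1})"
      using has_derivative_compose[OF h1 hess] by simp
    show "((\<lambda>t. g (x + t *\<^sub>R u)) has_vector_derivative H (x + t *\<^sub>R u) *v u) (at t within {0..1})"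
      unfolding has_vector_derivative_def
      by (rule has_derivative_eq_rhs[OF h2]) (simp add: fun_eq_iff matrix_vector_mult_scaleR)
  qed simp
  then show ?thesis by simp
qed


lemma symm_transpose: "symm A \<Longrightarrow> transpose A = A"
  by (simp add: symm_def transpose_def vec_eq_iff)

lemma pdm_of_le:
  assumes "pdm m A" "symm B" "\<And>v. qf A v \<le> c * qf B v" "c > 0"
  shows "pdm (m / c) B"
  unfolding pdm_def
proof (intro conjI allI)
  show "symm B" by fact
  show "0 < m / c" using assms by (simp add: pdm_def)
  fix v
  have "m * (v \<bullet> v) \<le> qf A v" using assms(1) by (simp add: pdm_def)
  also have "\<dots> \<le> c * qf B v" by fact
  finally show "m / c * (v \<bullet> v) \<le> qf B v" using assms(4) by (simp add: field_simps)
qed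

lemma dq_le_scaled:
  assumes a: "pdm m A" and b: "pdm m' B" and c: "c > 0" and le: "\<And>v. qf A v \<le> c * qf B v"
  shows "dq B z \<le> c * dq A z"
proof -
  have cb: "pdm (c * m') (c *\<^sub>R B)" by (rule pdm_scale[OF b c])
  have "dq (c *\<^sub>R B) z \<le> dq A z" by (rule dq_mono[OF a cb]) (simp add: le)
  then have "dq B z / c \<le> dq A z" by (simp add: dq_scale_mat[OF b c])
  then show ?thesis using c by (simp add: field_simps)
qed

lemma op_bound:
  assumes a: "pdm m A" and up: "\<And>v. qf A v \<le> L * (v \<bullet> v)" and L0: "0 \<le> L"
  shows "(A *v w) \<bullet> (A *v w) \<le> L^2 * (w \<bullet> w)"
proof -
  have s: "symm A" using a by (simp add: pdm_def)
  let ?y = "A *v w"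
  have e: "w \<bullet> (A *v ?y) = ?y \<bullet> ?y" using symm_dot[OF s, of w ?y] by (simp add: inner_commute)
  have "(?y \<bullet> ?y)^2 \<le> qf A w * qf A ?y" using CS_psd[OF s pdm_psd[OF a], of w ?y] e by simp
  also have "\<dots> \<le> (L * (w \<bullet> w)) * (L * (?y \<bullet> ?y))"
    by (intro mult_mono up) (auto simp: pdm_psd[OF a] L0)
  finally have h: "(?y \<bullet> ?y) * (?y \<bullet> ?y) \<le> (L^2 * (w \<bullet> w)) * (?y \<bullet> ?y)"
    by (simp add: power2_eq_square mult_ac)
  show ?thesis
  proof (cases "?y \<bullet> ?y = 0")
    case True then show ?thesis using L0 by simp
  next
    case False
    then have "?y \<bullet> ?y > 0" by (simp add: inner_gt_zero_iff)
    then show ?thesis using h by (meson mult_right_le_imp_le)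
  qed
qed

lemma inv_pdm:
  assumes a: "pdm m A" and up: "\<And>v. qf A v \<le> L * (v \<bullet> v)" and L: "L > 0"
  shows "pdm (m / L^2) (matrix_inv A)"
  unfolding pdm_def
proof (intro conjI allI)
  have i: "invertible A" by (rule pdm_invertible[OF a])
  show "symm (matrix_inv A)" by (rule inv_symm) (use a i in \<open>auto simp: pdm_def\<close>)
  show "0 < m / L^2" using a L by (simp add: pdm_def)
  fix v
  let ?w = "matrix_inv A *v v"
  have "v \<bullet> v = (A *v ?w) \<bullet> (A *v ?w)" using i by simp
  also have "\<dots> \<le> L^2 * (?w \<bullet> ?w)" by (rule op_bound[OF a up]) (use L in simp)
  finally have 1: "v \<bullet> v \<le> L^2 * (?w \<bullet> ?w)" .
  have 2: "m * (?w \<bullet> ?w) \<le> qf A ?w" using a by (simp add: pdm_def)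
  have "qf (matrix_inv A) v = qf A ?w" using dq_qf[OF a, of v] by (simp add: dq_def qf_def)
  have m0: "m > 0" using a by (simp add: pdm_def)
  have "m / L^2 * (v \<bullet> v) \<le> m / L^2 * (L^2 * (?w \<bullet> ?w))"
    using 1 m0 by (intro mult_left_mono) auto
  also have "\<dots> = m * (?w \<bullet> ?w)" using L by simp
  also have "\<dots> \<le> qf (matrix_inv A) v" using 2 dq_qf[OF a, of v] by (simp add: dq_def qf_def)
  finally show "m / L^2 * (v \<bullet> v) \<le> qf (matrix_inv A) v" .
qed

lemma qf_inv: "qf (matrix_inv A) v = dq A v"
  by (simp add: qf_def dq_def)

lemma sq_le:
  assumes "0 \<le> X" "0 \<le> c" "X \<le> c * sqrt X" shows "sqrt X \<le> c"
proof (cases "X = 0")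
  case True then show ?thesis using assms by simp
next
  case False
  then have "sqrt X > 0" using assms by simp
  moreover have "sqrt X * sqrt X \<le> c * sqrt X" using assms by simp
  ultimately show ?thesis by (meson mult_right_le_imp_le)
qed

lemma step_lin:
  fixes H0 H1 J G :: "real^'n^'n" and gv :: "real^'n"
  assumes pH0: "pdm \<mu> H0" and pH1: "pdm \<mu>' H1" and upH0: "\<And>v. qf H0 v \<le> L * (v \<bullet> v)" and L: "L > 0"
    and sJ: "symm J" and sG: "symm G" and rho: "0 \<le> \<rho>" and rho': "0 \<le> \<rho>'" and eta: "1 \<le> \<eta>"
    and HG: "\<And>v. qf H0 v \<le> (1 + \<rho>') * qf G v" and GH: "\<And>v. qf G v \<le> \<eta> * qf H0 v"
    and J1: "\<And>v. qf J v \<le> (1 + \<rho>) * qf H0 v"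
    and J2: "\<And>v. qf H0 v - qf J v \<le> \<rho> * qf H0 v"
    and H01: "\<And>v. qf H0 v \<le> (1 + 2 * \<rho>) * qf H1 v"
  shows "sqrt (qf H0 (matrix_inv G *v gv)) \<le> (1 + \<rho>') * sqrt (dq H0 gv)"
    and "sqrt (dq H1 (gv - J *v (matrix_inv G *v gv)))
          \<le> (1 + \<rho>) * (max \<rho>' (1 - 1/\<eta>) + \<rho> * (1 + \<rho>')) * sqrt (dq H0 gv)"
proof -
  have sH0: "symm H0" using pH0 by (simp add: pdm_def)
  have pG: "pdm (\<mu> / (1 + \<rho>')) G" by (rule pdm_of_le[OF pH0 sG HG]) (use rho' in simp)
  have iG: "invertible G" by (rule pdm_invertible[OF pG])
  have iH0: "invertible H0" by (rule pdm_invertible[OF pH0])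
  define z where "z = gv"
  define p where "p = matrix_inv G *v z"
  have Gp: "G *v p = z" using iG by (simp add: p_def)
  define lam where "lam = sqrt (dq H0 z)"
  define r where "r = sqrt (qf H0 p)"
  have lam0: "0 \<le> lam" using dq_nonneg[OF pH0] by (simp add: lam_def)
  have r0: "0 \<le> r" using pdm_psd[OF pH0] by (simp add: r_def)
  have rb: "r \<le> (1 + \<rho>') * lam"
  proof -
    have "qf H0 p \<le> (1 + \<rho>') * qf G p" by (rule HG)
    also have "qf G p = z \<bullet> p" by (simp add: qf_def Gp inner_commute)
    also have "(1 + \<rho>') * (z \<bullet> p) \<le> (1 + \<rho>') * (lam * r)"
      using dual_CS[OF pH0, of z p] rho' by (intro mult_left_mono) (auto simp: lam_def r_def)
    finally have hh: "qf H0 p \<le> ((1 + \<rho>') * lam) * sqrt (qf H0 p)" by (simp add: r_def mult_ac)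
    show ?thesis unfolding r_def by (rule sq_le[OF pdm_psd[OF pH0] _ hh]) (use rho' lam0 in simp)
  qed
  then show "sqrt (qf H0 (matrix_inv G *v gv)) \<le> (1 + \<rho>') * sqrt (dq H0 gv)"
    by (simp add: r_def p_def z_def lam_def)
  define y1 where "y1 = z - H0 *v p"
  define y2 where "y2 = (H0 - J) *v p"
  have g1: "gv - J *v (matrix_inv G *v gv) = y1 + y2"
    by (simp add: y1_def y2_def z_def[symmetric] p_def[symmetric] matrix_vector_mult_diff_rdistrib)
  define \<beta> where "\<beta> = max \<rho>' (1 - 1/\<eta>)"
  have b0: "0 \<le> \<beta>" using rho' by (simp add: \<beta>_def)
  let ?Q = "matrix_inv H0"
  let ?D = "matrix_inv H0 - matrix_inv G"
  have pQ: "pdm (\<mu> / L^2) ?Q" by (rule inv_pdm[OF pH0 upH0 L])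
  have sGi: "symm (matrix_inv G)" by (rule inv_symm[OF sG iG])
  have sD: "symm ?D" using pQ sGi by (simp add: pdm_def)
  have dD: "\<And>a. qf ?D a = dq H0 a - dq G a" by (simp add: qf_inv)
  have lowD: "\<And>a. - \<rho>' * qf ?Q a \<le> qf ?D a"
  proof -
    fix a
    have "dq G a \<le> (1 + \<rho>') * dq H0 a" by (rule dq_le_scaled[OF pH0 pG _ HG]) (use rho' in simp)
    then show "- \<rho>' * qf ?Q a \<le> qf ?D a" by (simp add: dD qf_inv algebra_simps)
  qed
  have upD: "\<And>a. qf ?D a \<le> (1 - 1/\<eta>) * qf ?Q a"
  proof -
    fix a
    have "dq H0 a \<le> \<eta> * dq G a" by (rule dq_le_scaled[OF pG pH0 _ GH]) (use eta in simp)
    then have "dq H0 a / \<eta> \<le> dq G a" using eta by (simp add: field_simps)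
    then show "qf ?D a \<le> (1 - 1/\<eta>) * qf ?Q a" by (simp add: dD qf_inv algebra_simps)
  qed
  have eta0: "0 \<le> 1 - 1/\<eta>" using eta by simp
  have bb: "\<bar>z \<bullet> (?D *v y1)\<bar> \<le> \<beta> * (sqrt (qf ?Q z) * sqrt (qf ?Q y1))"
    unfolding \<beta>_def by (rule bilin_bound[OF pQ sD rho' eta0 lowD upD])
  have eq1: "z \<bullet> (?D *v y1) = dq H0 y1"
  proof -
    have Hy1: "matrix_inv H0 *v y1 = matrix_inv H0 *v z - p"
      using iH0 by (simp add: y1_def matrix_vector_mult_diff_distrib)
    have a1: "z \<bullet> (matrix_inv G *v y1) = p \<bullet> y1"
      using symm_dot[OF sGi, of z y1] by (simp add: p_def inner_commute)
    have a2: "(H0 *v p) \<bullet> (matrix_inv H0 *v z) = p \<bullet> z"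
      using symm_dot[OF sH0, of p "matrix_inv H0 *v z"] iH0 by (simp add: inner_commute)
    have "z \<bullet> (?D *v y1) = z \<bullet> (matrix_inv H0 *v y1) - z \<bullet> (matrix_inv G *v y1)"
      by (simp add: matrix_vector_mult_diff_rdistrib inner_diff_right)
    also have "\<dots> = dq H0 z - z \<bullet> p - p \<bullet> z + qf H0 p"
      unfolding a1 Hy1 by (simp add: y1_def dq_def qf_def inner_diff_right inner_diff_left inner_commute)
    also have "\<dots> = dq H0 y1"
      unfolding dq_def Hy1 using a2
      by (simp add: y1_def qf_def inner_diff_right inner_diff_left inner_commute)
    finally show ?thesis .
  qed
  have y1b: "sqrt (dq H0 y1) \<le> \<beta> * lam"
  proof (rule sq_le[OF dq_nonneg[OF pH0]])
    show "0 \<le> \<beta> * lam" using b0 lam0 by simp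
    have "dq H0 y1 \<le> \<beta> * (sqrt (qf ?Q z) * sqrt (qf ?Q y1))" using bb eq1 by simp
    then show "dq H0 y1 \<le> \<beta> * lam * sqrt (dq H0 y1)" by (simp add: qf_inv lam_def mult_ac)
  qed
  let ?D2 = "H0 - J"
  have sD2: "symm ?D2" using sH0 sJ by simp
  have low2: "\<And>a. - \<rho> * qf H0 a \<le> qf ?D2 a" using J1 by (simp add: algebra_simps)
  have up2: "\<And>a. qf ?D2 a \<le> \<rho> * qf H0 a" using J2 by simp
  define q' where "q' = matrix_inv H0 *v y2"
  have eq2: "dq H0 y2 = p \<bullet> (?D2 *v q')"
  proof -
    have "dq H0 y2 = q' \<bullet> y2" by (simp add: dq_def q'_def inner_commute)
    also have "\<dots> = q' \<bullet> (?D2 *v p)" by (simp add: y2_def)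
    also have "\<dots> = p \<bullet> (?D2 *v q')" by (rule symm_dot[OF sD2])
    finally show ?thesis .
  qed
  have bb2: "\<bar>p \<bullet> (?D2 *v q')\<bar> \<le> max \<rho> \<rho> * (sqrt (qf H0 p) * sqrt (qf H0 q'))"
    by (rule bilin_bound[OF pH0 sD2 rho rho low2 up2])
  have y2b: "sqrt (dq H0 y2) \<le> \<rho> * r"
  proof (rule sq_le[OF dq_nonneg[OF pH0]])
    show "0 \<le> \<rho> * r" using rho r0 by simp
    have "qf H0 q' = dq H0 y2" by (simp add: dq_qf[OF pH0] q'_def)
    then show "dq H0 y2 \<le> \<rho> * r * sqrt (dq H0 y2)"
      using bb2 eq2 by (simp add: r_def mult_ac)
  qed
  have t1: "sqrt (dq H0 (y1 + y2)) \<le> (\<beta> + \<rho> * (1 + \<rho>')) * lam"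
  proof -
    have "sqrt (dq H0 (y1 + y2)) \<le> sqrt (dq H0 y1) + sqrt (dq H0 y2)" by (rule dq_tri[OF pH0])
    also have "\<dots> \<le> \<beta> * lam + \<rho> * ((1 + \<rho>') * lam)"
      using y1b y2b rb rho by (smt (verit) mult_left_mono)
    finally show ?thesis by (simp add: algebra_simps)
  qed
  have t2: "dq H1 (y1 + y2) \<le> (1 + 2 * \<rho>) * dq H0 (y1 + y2)"
    by (rule dq_le_scaled[OF pH0 pH1 _ H01]) (use rho in simp)
  have "sqrt (dq H1 (y1 + y2)) \<le> sqrt (1 + 2 * \<rho>) * sqrt (dq H0 (y1 + y2))"
    using t2 by (metis real_sqrt_le_mono real_sqrt_mult)
  also have "\<dots> \<le> (1 + \<rho>) * ((\<beta> + \<rho> * (1 + \<rho>')) * lam)"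
  proof (rule mult_mono[OF _ t1])
    have "1 + 2 * \<rho> \<le> (1 + \<rho>)^2" by (simp add: power2_eq_square algebra_simps)
    then show "sqrt (1 + 2 * \<rho>) \<le> 1 + \<rho>" using rho by (simp add: real_le_lsqrt real_sqrt_le_iff)
  qed (use rho dq_nonneg[OF pH0] in auto)
  finally show "sqrt (dq H1 (gv - J *v (matrix_inv G *v gv)))
          \<le> (1 + \<rho>) * (max \<rho>' (1 - 1/\<eta>) + \<rho> * (1 + \<rho>')) * sqrt (dq H0 gv)"
    unfolding g1 by (simp add: \<beta>_def lam_def z_def mult_ac)
qed

lemma symm_outer: "symm (outer w w)"
  by (simp add: symm_def outer_def mult.commute)

lemma SR1_form:
  assumes sR: "symm (T - J)" and w: "w = (T - J) *v u" and nz: "w \<noteq> 0"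
  shows "SR1 J T u = T - (1 / (u \<bullet> w)) *\<^sub>R outer w w"
proof -
  have "(T - J) ** outer u u ** (T - J) = outer w w"
    by (simp add: mat_outer outer_mat symm_transpose[OF sR] w)
  then show ?thesis using nz by (simp add: SR1_def w)
qed

lemma step_sr1:
  fixes H1 J G :: "real^'n^'n" and gv :: "real^'n"
  assumes pH1: "pdm \<mu> H1" and sJ: "symm J" and pG: "pdm mG G"
    and c: "1 \<le> c"
    and JT: "\<And>v. qf J v \<le> c * qf G v"
    and J3: "\<And>v. qf H1 v \<le> (1 + \<rho>) * qf J v" and rho: "0 \<le> \<rho>"
  defines "u \<equiv> - (matrix_inv G *v gv)" and "G1 \<equiv> SR1 J (c *\<^sub>R G) (- (matrix_inv G *v gv))"
  shows "symm G1" "\<And>v. qf J v \<le> qf G1 v" "\<And>v. qf G1 v \<le> c * qf G v"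
    and "\<exists>\<theta>\<ge>0. sqrt (dq G1 (gv + J *v u)) \<le> sqrt (c * dq G gv) * (\<theta> + (1 - 1/c))
            \<and> det G1 * (1 + \<theta>^2) = det (c *\<^sub>R G)"
proof -
  have G1_def: "G1 = SR1 J (c *\<^sub>R G) u" by (simp add: G1_def u_def)
  define T where "T = c *\<^sub>R G"
  have sG: "symm G" using pG by (simp add: pdm_def)
  have c0: "c > 0" using c by simp
  have sT: "symm T" using sG by (simp add: T_def)
  have pT: "pdm (c * mG) T" unfolding T_def by (rule pdm_scale[OF pG c0])
  have iG: "invertible G" by (rule pdm_invertible[OF pG])
  have iT: "invertible T" by (rule pdm_invertible[OF pT])
  have pJ: "pdm (\<mu> / (1 + \<rho>)) J" by (rule pdm_of_le[OF pH1 sJ J3]) (use rho in simp)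
  define R where "R = T - J"
  have sR: "symm R" using sT sJ by (simp add: R_def)
  have qR: "\<And>v. qf R v = qf T v - qf J v" by (simp add: R_def)
  have pR: "\<And>v. 0 \<le> qf R v" using JT by (simp add: qR T_def)
  define w where "w = R *v u"
  define \<tau> where "\<tau> = dq G gv"
  have Gu: "G *v u = - gv" using iG by (simp add: u_def vec.neg)
  have tau: "\<tau> = qf G u"
  proof -
    have "dq G gv = dq G (G *v (- u))" using Gu by (simp add: vec.neg)
    also have "\<dots> = qf G (- u)" by (rule dq_A[OF pG])
    finally show ?thesis by (simp add: \<tau>_def)
  qed
  have qTu: "qf T u = c * \<tau>" by (simp add: T_def tau)
  have tau0: "0 \<le> \<tau>" using dq_nonneg[OF pG] by (simp add: \<tau>_def)
  have g1: "gv + J *v u = (- (1/c)) *\<^sub>R w + (1 - 1/c) *\<^sub>R (J *v u)"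
  proof -
    have "w = c *\<^sub>R (G *v u) - J *v u"
      by (simp add: w_def R_def T_def matrix_vector_mult_diff_rdistrib scaleR_matrix_vector_assoc[symmetric])
    then have "w = - c *\<^sub>R gv - J *v u" by (simp add: Gu)
    then have h: "w + J *v u = - c *\<^sub>R gv" by (simp add: algebra_simps)
    have h2: "(1/c) *\<^sub>R (w + J *v u) = - gv" using c0 by (simp add: h)
    have "(- (1/c)) *\<^sub>R w + (1 - 1/c) *\<^sub>R (J *v u) = - ((1/c) *\<^sub>R (w + J *v u)) + J *v u"
      by (simp add: algebra_simps)
    then show ?thesis by (simp add: h2)
  qed
  have eps0: "0 \<le> 1 - 1/c" using c by simp
  have JG: "\<And>v. qf J v \<le> qf T v" using JT by (simp add: T_def)
  show "symm G1" "\<And>v. qf J v \<le> qf G1 v" "\<And>v. qf G1 v \<le> c * qf G v"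
    "\<exists>\<theta>\<ge>0. sqrt (dq G1 (gv + J *v u)) \<le> sqrt (c * dq G gv) * (\<theta> + (1 - 1/c))
            \<and> det G1 * (1 + \<theta>^2) = det (c *\<^sub>R G)"
  proof -
    consider "w = 0" | "w \<noteq> 0" by blast
    then have "symm G1 \<and> (\<forall>v. qf J v \<le> qf G1 v) \<and> (\<forall>v. qf G1 v \<le> c * qf G v) \<and>
      (\<exists>\<theta>\<ge>0. sqrt (dq G1 (gv + J *v u)) \<le> sqrt (c * dq G gv) * (\<theta> + (1 - 1/c))
            \<and> det G1 * (1 + \<theta>^2) = det (c *\<^sub>R G))"
    proof cases
      case 1
      have G1T: "G1 = T" using 1 by (simp add: G1_def SR1_def T_def[symmetric] w_def R_def)
      have JuTu: "J *v u = T *v u" using 1 by (simp add: w_def R_def matrix_vector_mult_diff_rdistrib)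
      have "sqrt (dq G1 (gv + J *v u)) = sqrt (dq T ((1 - 1/c) *\<^sub>R (T *v u)))"
        using g1 1 JuTu G1T by simp
      also have "\<dots> = (1 - 1/c) * sqrt (c * \<tau>)"
        using eps0 by (simp add: dq_A[OF pT] qTu real_sqrt_mult)
      finally have "sqrt (dq G1 (gv + J *v u)) \<le> sqrt (c * dq G gv) * (0 + (1 - 1/c))"
        by (simp add: \<tau>_def mult_ac)
      then show ?thesis using G1T JG sT by (auto simp: T_def)
    next
      case 2
      define a where "a = u \<bullet> w"
      have aq: "a = qf R u" by (simp add: a_def w_def qf_def)
      have apos: "a > 0"
      proof -
        have "(w \<bullet> (R *v u))^2 \<le> qf R w * qf R u" by (rule CS_psd[OF sR pR])
        then have "(w \<bullet> w)^2 \<le> qf R w * a" by (simp add: aq w_def)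
        moreover have "w \<bullet> w > 0" using 2 by simp
        ultimately have "0 < qf R w * a" by (smt (verit) zero_less_power)
        moreover have "0 \<le> a" using pR by (simp add: aq)
        ultimately show ?thesis by (metis less_eq_real_def mult_zero_right order_less_irrefl)
      qed
      have G1f: "G1 = T - (1 / a) *\<^sub>R outer w w"
        unfolding G1_def T_def[symmetric] a_def
        by (rule SR1_form) (use sR 2 in \<open>auto simp: R_def w_def\<close>)
      have qG1: "\<And>v. qf G1 v = qf T v - (w \<bullet> v)^2 / a"
        by (simp add: G1f qf_outer_self)
      have sG1: "symm G1" using sT by (simp add: G1f symm_outer)
      have JG1: "\<And>v. qf J v \<le> qf G1 v"
      proof -
        fix v
        have "(v \<bullet> (R *v u))^2 \<le> qf R v * qf R u" by (rule CS_psd[OF sR pR])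
        then have "(w \<bullet> v)^2 \<le> qf R v * a" by (simp add: aq w_def inner_commute)
        then have "(w \<bullet> v)^2 / a \<le> qf R v" using apos by (simp add: divide_le_eq mult.commute)
        then show "qf J v \<le> qf G1 v" by (simp add: qG1 qR)
      qed
      have G1G: "\<And>v. qf G1 v \<le> c * qf G v"
        using apos by (simp add: qG1 T_def)
      have pG1: "pdm (\<mu> / (1 + \<rho>) / 1) G1" by (rule pdm_of_le[OF pJ sG1]) (use JG1 in auto)
      have iG1: "invertible G1" by (rule pdm_invertible[OF pG1])
      define s where "s = matrix_inv T *v w"
      define b where "b = w \<bullet> s"
      have Ts: "T *v s = w" using iT by (simp add: s_def)
      have snz: "s \<noteq> 0" using Ts 2 by auto
      have bq: "b = qf T s" by (simp add: b_def qf_def Ts inner_commute)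
      have bpos: "b > 0"
      proof -
        have "c * mG * (s \<bullet> s) \<le> qf T s" using pT by (simp add: pdm_def)
        moreover have "c * mG * (s \<bullet> s) > 0" using pT snz by (simp add: pdm_def)
        ultimately show ?thesis by (simp add: bq)
      qed
      have G1s: "G1 *v s = (1 - b / a) *\<^sub>R w"
        by (simp add: G1f matrix_vector_mult_diff_rdistrib scaleR_matrix_vector_assoc[symmetric]
            outer_mv Ts b_def algebra_simps)
      have ab: "0 < 1 - b / a"
      proof -
        have "qf G1 s = (1 - b / a) * b" by (simp add: qf_def G1s b_def inner_commute)
        moreover have "qf G1 s > 0"
        proof -
          have "\<mu> / (1 + \<rho>) / 1 * (s \<bullet> s) \<le> qf G1 s" using pG1 by (simp add: pdm_def)
          moreover have "\<mu> / (1 + \<rho>) / 1 * (s \<bullet> s) > 0" by (rule mult_pos_pos) (use pG1 snz in \<open>auto simp: pdm_def\<close>)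
          ultimately show ?thesis by simp
        qed
        ultimately show ?thesis using bpos by (simp add: zero_less_mult_iff)
      qed
      have amb: "a - b > 0" using ab apos by (simp add: field_simps)
      define \<theta> where "\<theta> = sqrt (b / (a - b))"
      have th0: "0 \<le> \<theta>" using bpos amb by (simp add: \<theta>_def)
      have G1iw: "matrix_inv G1 *v w = (1 / (1 - b / a)) *\<^sub>R s"
      proof -
        have "G1 *v ((1 / (1 - b / a)) *\<^sub>R s) = w" using ab amb by (simp add: matrix_vector_mult_scaleR G1s)
        then show ?thesis using iG1 by (metis inv_mv(2))
      qed
      have dqw: "dq G1 w = a * \<theta>^2"
      proof -
        have "dq G1 w = b / (1 - b / a)" by (simp add: dq_def G1iw b_def)
        also have "\<dots> = a * (b / (a - b))" using apos amb by (simp add: field_simps)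
        finally show ?thesis using bpos amb by (simp add: \<theta>_def)
      qed
      have G1u: "G1 *v u = J *v u"
        using apos by (simp add: G1f matrix_vector_mult_diff_rdistrib scaleR_matrix_vector_assoc[symmetric]
            outer_mv a_def inner_commute w_def R_def)
      have dqJu: "dq G1 (J *v u) \<le> c * \<tau>"
      proof -
        have "dq G1 (J *v u) = qf G1 u" using dq_A[OF pG1, of u] G1u by simp
        also have "\<dots> \<le> qf T u" using apos by (simp add: qG1)
        finally show ?thesis by (simp add: qTu)
      qed
      have a_le: "a \<le> c * \<tau>" using pdm_psd[OF pJ, of u] by (simp add: aq qR qTu)
      have "sqrt (dq G1 (gv + J *v u)) \<le> sqrt (dq G1 ((- (1/c)) *\<^sub>R w)) + sqrt (dq G1 ((1 - 1/c) *\<^sub>R (J *v u)))"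
        unfolding g1 by (rule dq_tri[OF pG1])
      also have "\<dots> = (1/c) * sqrt (dq G1 w) + (1 - 1/c) * sqrt (dq G1 (J *v u))"
        using c0 eps0 by (simp add: real_sqrt_mult)
      also have "\<dots> \<le> sqrt (c * \<tau>) * \<theta> + (1 - 1/c) * sqrt (c * \<tau>)"
      proof (rule add_mono)
        have "(1/c) * sqrt (dq G1 w) \<le> sqrt (dq G1 w)"
          using c dq_nonneg[OF pG1, of w] by (simp add: divide_le_eq mult_le_cancel_left1)
        also have "\<dots> = sqrt a * \<theta>" using apos th0 by (simp add: dqw real_sqrt_mult)
        also have "\<dots> \<le> sqrt (c * \<tau>) * \<theta>" using a_le th0 by (simp add: mult_right_mono)
        finally show "(1/c) * sqrt (dq G1 w) \<le> sqrt (c * \<tau>) * \<theta>" .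
        show "(1 - 1/c) * sqrt (dq G1 (J *v u)) \<le> (1 - 1/c) * sqrt (c * \<tau>)"
          using dqJu eps0 by (simp add: mult_left_mono)
      qed
      finally have tau_b: "sqrt (dq G1 (gv + J *v u)) \<le> sqrt (c * dq G gv) * (\<theta> + (1 - 1/c))"
        by (simp add: \<tau>_def algebra_simps)
      have detG1: "det G1 = det T * (1 - b / a)"
      proof -
        have "G1 = T ** (mat 1 + outer ((- (1/a)) *\<^sub>R s) w)"
          by (simp add: G1f mm_diff_l mm_scale_r mat_outer Ts outer_neg outer_scale)
        then have "det G1 = det T * det (mat 1 + outer ((- (1/a)) *\<^sub>R s) w)" by (simp add: det_mul)
        also have "det (mat 1 + outer ((- (1/a)) *\<^sub>R s) w) = 1 - b / a"
          by (simp add: MDL b_def inner_commute)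
        finally show ?thesis .
      qed
      have "det G1 * (1 + \<theta>^2) = det T"
      proof -
        have e2: "1 + \<theta>^2 = a / (a - b)" using bpos amb by (simp add: \<theta>_def field_simps)
        have e1: "det G1 = det T * ((a - b) / a)" using detG1 apos by (simp add: field_simps)
        have "(a - b) / a * (a / (a - b)) = 1" using apos amb by simp
        then show ?thesis unfolding e1 e2 by (metis mult.assoc mult.right_neutral)
      qed
      then show ?thesis using sG1 JG1 G1G tau_b th0 by (auto simp: T_def)
    qed
    then show "symm G1" "\<And>v. qf J v \<le> qf G1 v" "\<And>v. qf G1 v \<le> c * qf G v"
      "\<exists>\<theta>\<ge>0. sqrt (dq G1 (gv + J *v u)) \<le> sqrt (c * dq G gv) * (\<theta> + (1 - 1/c))
            \<and> det G1 * (1 + \<theta>^2) = det (c *\<^sub>R G)" by auto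
  qed
qed


lemma lin_factor:
  fixes K \<rho> \<rho>' P :: real
  assumes K: "1 \<le> K" and r: "0 \<le> \<rho>" "\<rho> \<le> 9/(128*K)" and r': "0 \<le> \<rho>'" "\<rho>' \<le> 9/(128*K)"
    and P: "1 \<le> P" "P \<le> 32/23"
  shows "(1 + \<rho>) * (max \<rho>' (1 - 1/(K*P)) + \<rho> * (1 + \<rho>')) \<le> 1 - 1/(2*K)"
proof -
  define x where "x = 1/K"
  have x0: "0 < x" and x1: "x \<le> 1" using K by (auto simp: x_def)
  have rx: "\<rho> \<le> 9/128 * x" and rx': "\<rho>' \<le> 9/128 * x" using r r' by (auto simp: x_def)
  have KP: "23/32 * x \<le> 1/(K*P)"
  proof -
    have "K * P \<le> K * (32/23)" using P K by (intro mult_left_mono) auto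
    then have "1/(K * (32/23)) \<le> 1/(K*P)" using K P by (intro divide_left_mono) auto
    then show ?thesis by (simp add: x_def)
  qed
  define C :: real where "C = 10543/16384"
  have m: "max \<rho>' (1 - 1/(K*P)) \<le> 1 - 23/32 * x" using rx' KP x1 by auto
  have rr: "\<rho> * (1 + \<rho>') \<le> (9/128 * x) * (1 + 9/128)"
    by (rule mult_mono) (use rx rx' x1 r r' in auto)
  have inner: "max \<rho>' (1 - 1/(K*P)) + \<rho> * (1 + \<rho>') \<le> 1 - C * x"
    using m rr by (simp add: C_def algebra_simps)
  have Cx: "0 \<le> 1 - C * x" using x1 x0 by (simp add: C_def)
  have "(1 + \<rho>) * (max \<rho>' (1 - 1/(K*P)) + \<rho> * (1 + \<rho>')) \<le> (1 + \<rho>) * (1 - C * x)"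
    by (rule mult_left_mono[OF inner]) (use r in simp)
  also have "\<dots> \<le> (1 + 9/128 * x) * (1 - C * x)"
    by (rule mult_right_mono[OF _ Cx]) (use rx in simp)
  also have "\<dots> \<le> 1 - x / 2"
  proof -
    define a :: real where "a = 9/128"
    have "(1 + a * x) * (1 - C * x) = 1 - (C - a) * x - (a * C) * (x * x)" by (simp add: algebra_simps)
    moreover have "0 \<le> (a * C) * (x * x)" by (simp add: a_def C_def)
    moreover have "(C - a) * x \<ge> x / 2" using x0 by (simp add: a_def C_def)
    ultimately show ?thesis by (simp add: a_def)
  qed
  finally show ?thesis by (simp add: x_def)
qed

lemma exp_small: "exp (9/32 :: real) \<le> 32/23"
proof -
  have "1 + (- 9/32) \<le> exp (- 9/32 :: real)" by (rule exp_ge_add_one_self)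
  then have "23/32 \<le> exp (- 9/32 :: real)" by simp
  then have "1 / exp (- 9/32 :: real) \<le> 1 / (23/32)" by (intro divide_left_mono) auto
  then show ?thesis by (simp add: exp_minus field_simps)
qed

lemma prod_exp_bound:
  fixes a :: "nat \<Rightarrow> real"
  assumes "\<And>i. i \<in> S \<Longrightarrow> 0 \<le> a i"
  shows "(\<Prod>i\<in>S. 1 + a i) \<le> exp (\<Sum>i\<in>S. a i)"
proof (cases "finite S")
  case True
  have "(\<Prod>i\<in>S. 1 + a i) \<le> (\<Prod>i\<in>S. exp (a i))"
    by (rule prod_mono) (use assms in auto)
  also have "\<dots> = exp (\<Sum>i\<in>S. a i)" by (simp add: exp_sum True)
  finally show ?thesis .
next
  case False then show ?thesis by simp
qed

lemma amgm_special:
  fixes y :: "nat \<Rightarrow> real"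
  assumes k: "k \<ge> 1" and y: "\<And>i. 0 \<le> y i"
  shows "(\<Prod>i<k. y i) \<le> ((\<Prod>i<k. 1 + y i) powr (1 / real k) - 1) ^ k"
proof -
  define Pr where "Pr = (\<Prod>i<k. 1 + y i)"
  define Y where "Y = (\<Prod>i<k. y i)"
  have Ppos: "Pr > 0" unfolding Pr_def by (rule prod_pos) (use y in \<open>auto simp: add_pos_nonneg\<close>)
  have Y0: "Y \<ge> 0" unfolding Y_def by (rule prod_nonneg) (use y in auto)
  have "0 \<in> {..<k}" using k by simp
  then have S: "finite {..<k}" "{..<k} \<noteq> {}" by auto
  have ca: "(\<Sum>i<k. (y i / (1 + y i)) / card {..<k}) \<ge> (\<Prod>i<k. y i / (1 + y i)) powr (1 / card {..<k})"
    by (rule arith_geom_mean[OF S]) (use y in simp)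
  have cb: "(\<Sum>i<k. (1 / (1 + y i)) / card {..<k}) \<ge> (\<Prod>i<k. 1 / (1 + y i)) powr (1 / card {..<k})"
    by (rule arith_geom_mean[OF S]) (use y in simp)
  have sum1: "(\<Sum>i<k. (y i / (1 + y i)) / card {..<k}) + (\<Sum>i<k. (1 / (1 + y i)) / card {..<k}) = 1"
  proof -
    have "(\<Sum>i<k. (y i / (1 + y i)) / card {..<k}) + (\<Sum>i<k. (1 / (1 + y i)) / card {..<k})
        = (\<Sum>i<k. (y i / (1 + y i) + 1 / (1 + y i)) / card {..<k})"
      by (simp add: sum.distrib add_divide_distrib)
    also have "\<dots> = (\<Sum>i<k. 1 / card {..<k})"
    proof (rule sum.cong)
      fix i assume "i \<in> {..<k}"
      have "1 + y i > 0" using y[of i] by simp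
      then show "(y i / (1 + y i) + 1 / (1 + y i)) / card {..<k} = 1 / card {..<k}"
        by (simp add: field_simps)
    qed simp
    also have "\<dots> = 1" using k by simp
    finally show ?thesis .
  qed
  have pa: "(\<Prod>i<k. y i / (1 + y i)) = Y / Pr" by (simp add: Y_def Pr_def prod_dividef)
  have pb: "(\<Prod>i<k. 1 / (1 + y i)) = 1 / Pr" by (simp add: Pr_def prod_dividef)
  define t where "t = 1 / real k"
  have "(Y / Pr) powr t + (1 / Pr) powr t \<le> 1"
    using ca cb sum1 unfolding pa pb t_def by simp
  then have "Y powr t / Pr powr t + 1 / Pr powr t \<le> 1"
    using Y0 Ppos by (simp add: powr_divide powr_one_eq_one)
  then have h: "Y powr t \<le> Pr powr t - 1"
    using Ppos by (simp add: field_simps)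
  have "Y = (Y powr t) ^ k"
  proof (cases "Y = 0")
    case True then show ?thesis using k by simp
  next
    case False
    then have "Y > 0" using Y0 by simp
    then have "(Y powr t) ^ k = Y powr (t * k)" by (simp add: powr_realpow[symmetric] powr_powr)
    also have "\<dots> = Y" using k Y0 by (simp add: t_def)
    finally show ?thesis by simp
  qed
  also have "\<dots> \<le> (Pr powr t - 1) ^ k"
    by (rule power_mono[OF h]) simp
  finally show ?thesis by (simp add: Y_def Pr_def t_def)
qed


locale sr1s =
  fixes f :: "real^'n \<Rightarrow> real"
    and g :: "real^'n \<Rightarrow> real^'n"
    and H :: "real^'n \<Rightarrow> real^'n^'n"
    and \<mu> L M :: real
    and x :: "nat \<Rightarrow> real^'n"
    and G :: "nat \<Rightarrow> real^'n^'n"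
    and r :: "nat \<Rightarrow> real"
  assumes grad: "\<And>y. (f has_derivative (\<lambda>h. g y \<bullet> h)) (at y)"
    and hess: "\<And>y. (g has_derivative (\<lambda>h. H y *v h)) (at y)"
    and mu_pos: "0 < \<mu>" and mu_le_L: "\<mu> \<le> L"
    and bounds: "\<And>y. loewner_le (\<mu> *\<^sub>R mat 1) (H y) \<and> loewner_le (H y) (L *\<^sub>R mat 1)"
    and ssc: "strongly_self_concordant H M"
    and G0: "G 0 = L *\<^sub>R mat 1"
    and x_step: "\<And>k. x (Suc k) = x k - matrix_inv (G k) *v g (x k)"
    and r_def: "\<And>k. r k = local_norm H (x k) (x (Suc k) - x k)"
    and G_step: "\<And>k. G (Suc k) =
        SR1 (integral {0..1} (\<lambda>t. H (x k + t *\<^sub>R (x (Suc k) - x k))))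
            (((1 + M * (if k = 0 then 0 else r (k - 1)) / 2) * (1 + M * r k / 2)) *\<^sub>R G k)
            (x (Suc k) - x k)"
begin

lemma sH: "symm (H y)" by (rule hessian_symm[OF grad hess])
lemma loH: "\<mu> * (v \<bullet> v) \<le> qf (H y) v"
  using bounds[of y] by (simp add: loewner_qf)
lemma upH: "qf (H y) v \<le> L * (v \<bullet> v)"
  using bounds[of y] by (simp add: loewner_qf)
lemma pH: "pdm \<mu> (H y)" using sH loH mu_pos by (simp add: pdm_def)
lemma M0: "0 \<le> M" using ssc by (simp add: strongly_self_concordant_def)
lemma sscq: "qf (H y) v - qf (H x') v \<le> M * local_norm H z (y - x') * qf (H w) v"
  by (rule ssc_qf[OF ssc])
lemma L_pos: "0 < L" using mu_pos mu_le_L by simp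

definition "u k = x (Suc k) - x k"
definition "Jk k = integral {0..1} (\<lambda>t::real. H (x k + t *\<^sub>R u k))"
definition "\<rho> k = M * r k / 2"
definition "\<rho>m k = (if k = 0 then 0 else \<rho> (k - 1))"
definition "cc k = (1 + \<rho>m k) * (1 + \<rho> k)"
definition "P k = (\<Prod>i<k. cc i)"
definition "lam k = sqrt (dq (H (x k)) (g (x k)))"
definition "tau k = dq (G k) (g (x k))"

lemmas CA = sH loH upH mu_pos M0 sscq

lemma qfH0: "0 \<le> qf (H y) v" by (rule qfH_nonneg[OF CA])

lemma r_nonneg: "0 \<le> r k"
  unfolding r_def by (rule ln_nonneg) (rule qfH0)

lemma rho_nonneg: "0 \<le> \<rho> k" using M0 r_nonneg by (simp add: \<rho>_def)
lemma rhom_nonneg: "0 \<le> \<rho>m k" using rho_nonneg by (simp add: \<rho>m_def)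
lemma cc_ge1: "1 \<le> cc k"
proof -
  have "1 * 1 \<le> (1 + \<rho>m k) * (1 + \<rho> k)"
    by (rule mult_mono) (use rho_nonneg[of k] rhom_nonneg[of k] in auto)
  then show ?thesis by (simp add: cc_def)
qed

lemma r_eq: "r k = local_norm H (x k) (u k)" by (simp add: r_def u_def)

lemma JB1k: "qf (Jk k) v \<le> (1 + \<rho> k) * qf (H (x k)) v"
  using JB1[OF CA, where x = "x k" and u = "u k" and v = v] by (simp add: Jk_def \<rho>_def r_eq)

lemma JB2k: "qf (H (x k)) v - qf (Jk k) v \<le> \<rho> k * qf (H (x k)) v"
  using JB2[OF CA, where x = "x k" and u = "u k" and v = v] by (simp add: Jk_def \<rho>_def r_eq)

lemma JB3k: "qf (H (x (Suc k))) v \<le> (1 + \<rho> k) * qf (Jk k) v"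
  using JB3[OF CA, where x = "x k" and u = "u k" and v = v] by (simp add: Jk_def \<rho>_def r_eq u_def)

lemma sJk: "symm (Jk k)"
  unfolding Jk_def by (rule J_symm[OF CA])

lemma H01k: "qf (H (x k)) v \<le> (1 + 2 * \<rho> k) * qf (H (x (Suc k))) v"
proof -
  have "qf (H (x k)) v - qf (H (x (Suc k))) v \<le> M * local_norm H (x k) (x k - x (Suc k)) * qf (H (x (Suc k))) v"
    by (rule sscq)
  also have "local_norm H (x k) (x k - x (Suc k)) = r k"
    using ln_neg[of H "x k" "x (Suc k) - x k"] by (simp add: r_def)
  finally show ?thesis by (simp add: \<rho>_def algebra_simps)
qed

lemma g_step: "g (x (Suc k)) = g (x k) + Jk k *v u k"
proof -
  have a: "((\<lambda>t. H (x k + t *\<^sub>R u k) *v u k) has_integral (g (x k + u k) - g (x k))) {0..1}"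
    by (rule ftc_g[OF hess])
  have b: "((\<lambda>t. H (x k + t *\<^sub>R u k) *v u k) has_integral (Jk k *v u k)) {0..1}"
    unfolding Jk_def by (rule J_mv[OF CA])
  have "Jk k *v u k = g (x k + u k) - g (x k)" by (rule has_integral_unique[OF b a])
  then show ?thesis by (simp add: u_def)
qed

lemma u_eq: "u k = - (matrix_inv (G k) *v g (x k))"
  using x_step[of k] by (simp add: u_def)

lemma G_step': "G (Suc k) = SR1 (Jk k) (cc k *\<^sub>R G k) (u k)"
  using G_step[of k] by (simp add: Jk_def u_def cc_def \<rho>m_def \<rho>_def)

lemma P_Suc: "P (Suc k) = P k * cc k" by (simp add: P_def)
lemma P_ge1: "1 \<le> P k"
  unfolding P_def by (rule prod_ge_1) (use cc_ge1 in auto)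

lemma sr1k:
  assumes pG: "pdm mG (G k)" and JT: "\<And>v. qf (Jk k) v \<le> cc k * qf (G k) v"
  shows "symm (G (Suc k))" "\<And>v. qf (Jk k) v \<le> qf (G (Suc k)) v" "\<And>v. qf (G (Suc k)) v \<le> cc k * qf (G k) v"
    and "\<exists>\<theta>\<ge>0. sqrt (tau (Suc k)) \<le> sqrt (cc k * tau k) * (\<theta> + (1 - 1/cc k))
            \<and> det (G (Suc k)) * (1 + \<theta>^2) = det (cc k *\<^sub>R G k)"
proof -
  have e: "G (Suc k) = SR1 (Jk k) (cc k *\<^sub>R G k) (- (matrix_inv (G k) *v g (x k)))"
    using G_step' u_eq by simp
  have e2: "g (x (Suc k)) = g (x k) + Jk k *v (- (matrix_inv (G k) *v g (x k)))"
    using g_step u_eq by simp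
  note S = step_sr1[OF pH[of "x (Suc k)"] sJk[of k] pG cc_ge1 JT JB3k rho_nonneg, where gv = "g (x k)"]
  show "symm (G (Suc k))" "\<And>v. qf (Jk k) v \<le> qf (G (Suc k)) v" "\<And>v. qf (G (Suc k)) v \<le> cc k * qf (G k) v"
    using S(1-3) unfolding e by auto
  show "\<exists>\<theta>\<ge>0. sqrt (tau (Suc k)) \<le> sqrt (cc k * tau k) * (\<theta> + (1 - 1/cc k))
            \<and> det (G (Suc k)) * (1 + \<theta>^2) = det (cc k *\<^sub>R G k)"
    using S(4) unfolding e tau_def e2[symmetric] by (simp add: e[symmetric])
qed

lemma inv: "symm (G k) \<and> (\<forall>v. qf (H (x k)) v \<le> (1 + \<rho>m k) * qf (G k) v) \<and> (\<forall>v. qf (G k) v \<le> L * P k * (v \<bullet> v))"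
proof (induction k)
  case 0
  show ?case using upH by (simp add: G0 \<rho>m_def P_def)
next
  case (Suc k)
  have sG: "symm (G k)" and HG: "\<And>v. qf (H (x k)) v \<le> (1 + \<rho>m k) * qf (G k) v"
    and GL: "\<And>v. qf (G k) v \<le> L * P k * (v \<bullet> v)" using Suc.IH by auto
  have pG: "pdm (\<mu> / (1 + \<rho>m k)) (G k)"
    by (rule pdm_of_le[OF pH sG HG]) (use rhom_nonneg[of k] in simp)
  have JT: "\<And>v. qf (Jk k) v \<le> cc k * qf (G k) v"
  proof -
    fix v
    have "qf (Jk k) v \<le> (1 + \<rho> k) * qf (H (x k)) v" by (rule JB1k)
    also have "\<dots> \<le> (1 + \<rho> k) * ((1 + \<rho>m k) * qf (G k) v)"
      by (rule mult_left_mono[OF HG]) (use rho_nonneg[of k] in simp)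
    finally show "qf (Jk k) v \<le> cc k * qf (G k) v" by (simp add: cc_def mult_ac)
  qed
  note S = sr1k[OF pG JT]
  have a: "\<And>v. qf (H (x (Suc k))) v \<le> (1 + \<rho>m (Suc k)) * qf (G (Suc k)) v"
  proof -
    fix v
    have "qf (H (x (Suc k))) v \<le> (1 + \<rho> k) * qf (Jk k) v" by (rule JB3k)
    also have "\<dots> \<le> (1 + \<rho> k) * qf (G (Suc k)) v"
      by (rule mult_left_mono[OF S(2)]) (use rho_nonneg[of k] in simp)
    finally show "qf (H (x (Suc k))) v \<le> (1 + \<rho>m (Suc k)) * qf (G (Suc k)) v" by (simp add: \<rho>m_def)
  qed
  have b: "\<And>v. qf (G (Suc k)) v \<le> L * P (Suc k) * (v \<bullet> v)"
  proof -
    fix v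
    have "qf (G (Suc k)) v \<le> cc k * qf (G k) v" by (rule S(3))
    also have "\<dots> \<le> cc k * (L * P k * (v \<bullet> v))"
      by (rule mult_left_mono[OF GL]) (use cc_ge1[of k] in simp)
    finally show "qf (G (Suc k)) v \<le> L * P (Suc k) * (v \<bullet> v)" by (simp add: P_Suc mult_ac)
  qed
  show ?case using S(1) a b by blast
qed

end


context sr1s begin

lemma K_ge1: "1 \<le> L / \<mu>" using mu_pos mu_le_L by simp

lemma sGk: "symm (G k)" using inv by blast
lemma HGk: "qf (H (x k)) v \<le> (1 + \<rho>m k) * qf (G k) v" using inv by blast
lemma GLk: "qf (G k) v \<le> L * P k * (v \<bullet> v)" using inv by blast

lemma GHk: "qf (G k) v \<le> (L / \<mu> * P k) * qf (H (x k)) v"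
proof -
  have "qf (G k) v \<le> L * P k * (v \<bullet> v)" by (rule GLk)
  also have "\<dots> = (L / \<mu> * P k) * (\<mu> * (v \<bullet> v))" using mu_pos by simp
  also have "\<dots> \<le> (L / \<mu> * P k) * qf (H (x k)) v"
    by (rule mult_left_mono[OF loH]) (use L_pos mu_pos P_ge1[of k] in simp)
  finally show ?thesis .
qed

lemma pGk: "pdm (\<mu> / (1 + \<rho>m k)) (G k)"
  by (rule pdm_of_le[OF pH sGk HGk]) (use rhom_nonneg[of k] in simp)

lemma eta_ge1: "1 \<le> L / \<mu> * P k"
  using K_ge1 P_ge1[of k] by (metis mult_mono' mult_1_left zero_le_one order_trans)

lemma lin_k:
  shows "r k \<le> (1 + \<rho>m k) * lam k"
    and "lam (Suc k) \<le> (1 + \<rho> k) * (max (\<rho>m k) (1 - 1/(L / \<mu> * P k)) + \<rho> k * (1 + \<rho>m k)) * lam k"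
proof -
  note S = step_lin[OF pH pH upH L_pos sJk sGk rho_nonneg rhom_nonneg eta_ge1 HGk GHk JB1k JB2k H01k,
      where gv = "g (x k)"]
  have rk: "r k = sqrt (qf (H (x k)) (matrix_inv (G k) *v g (x k)))"
    using r_eq[of k] u_eq[of k] by (simp add: ln_eq)
  show "r k \<le> (1 + \<rho>m k) * lam k" using S(1) by (simp add: rk lam_def)
  have gs: "g (x (Suc k)) = g (x k) - Jk k *v (matrix_inv (G k) *v g (x k))"
    using g_step[of k] u_eq[of k] by (simp add: vec.neg)
  show "lam (Suc k) \<le> (1 + \<rho> k) * (max (\<rho>m k) (1 - 1/(L / \<mu> * P k)) + \<rho> k * (1 + \<rho>m k)) * lam k"
    using S(2) by (simp add: lam_def gs)
qed

lemma lam_nonneg: "0 \<le> lam k"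
  unfolding lam_def using dq_nonneg[OF pH] by simp

lemma sum_rhom: "(\<Sum>i<Suc k. \<rho>m i) = (\<Sum>i<k. \<rho> i)"
  by (induction k) (simp_all add: \<rho>m_def)

lemma sum_rhom_le: "(\<Sum>i<k. \<rho>m i) \<le> (\<Sum>i<k. \<rho> i)"
proof (cases k)
  case 0 then show ?thesis by simp
next
  case (Suc j)
  then show ?thesis using sum_rhom[of j] rho_nonneg[of j] by simp
qed

lemma P_exp: "P k \<le> exp (2 * (\<Sum>i<k. \<rho> i))"
proof -
  have "P k = (\<Prod>i<k. 1 + \<rho>m i) * (\<Prod>i<k. 1 + \<rho> i)"
    by (simp add: P_def cc_def prod.distrib)
  also have "\<dots> \<le> exp (\<Sum>i<k. \<rho>m i) * exp (\<Sum>i<k. \<rho> i)"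
    by (intro mult_mono prod_exp_bound rhom_nonneg rho_nonneg prod_nonneg)
       (auto intro: add_nonneg_nonneg rhom_nonneg rho_nonneg)
  also have "\<dots> \<le> exp (\<Sum>i<k. \<rho> i) * exp (\<Sum>i<k. \<rho> i)"
    by (intro mult_right_mono) (auto simp: sum_rhom_le)
  also have "\<dots> = exp (2 * (\<Sum>i<k. \<rho> i))" by (simp add: exp_add[symmetric])
  finally show ?thesis .
qed

lemma geom_sum:
  fixes q :: real assumes "0 \<le> q" "q < 1"
  shows "(\<Sum>i<k. q^i) \<le> 1 / (1 - q)"
proof -
  have "(\<Sum>i<k. q^i) = (1 - q^k) / (1 - q)" using assms by (simp add: sum_gp_strict)
  also have "\<dots> \<le> 1 / (1 - q)" using assms by (intro divide_right_mono) auto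
  finally show ?thesis .
qed

lemma linear_phase:
  assumes init': "M * lam 0 \<le> 1 / (8 * (L / \<mu>))"
  shows "(\<forall>i\<le>k. lam i \<le> (1 - 1/(2 * (L / \<mu>)))^i * lam 0) \<and> (\<forall>i<k. \<rho> i \<le> 9/16 * M * lam i)"
proof (induction k)
  case 0 then show ?case by simp
next
  case (Suc k)
  define K where "K = L / \<mu>"
  define q where "q = 1 - 1/(2 * K)"
  have K1: "1 \<le> K" using K_ge1 by (simp add: K_def)
  have q0: "0 \<le> q" and q1: "q < 1" using K1 by (auto simp: q_def)
  have IH1: "\<And>i. i \<le> k \<Longrightarrow> lam i \<le> q^i * lam 0" using Suc.IH by (simp add: q_def K_def)
  have IH2: "\<And>i. i < k \<Longrightarrow> \<rho> i \<le> 9/16 * M * lam i" using Suc.IH by simp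
  have Mlam: "\<And>i. i \<le> k \<Longrightarrow> M * lam i \<le> 1 / (8 * K)"
  proof -
    fix i assume "i \<le> k"
    have "lam i \<le> q^i * lam 0" using IH1 \<open>i \<le> k\<close> .
    also have "\<dots> \<le> 1 * lam 0" using q0 q1 lam_nonneg[of 0] by (intro mult_right_mono power_le_one) auto
    finally have "M * lam i \<le> M * lam 0" using M0 by (simp add: mult_left_mono)
    then show "M * lam i \<le> 1 / (8 * K)" using init' by (simp add: K_def)
  qed
  have rb9: "\<And>i. i < k \<Longrightarrow> \<rho> i \<le> 9 / (128 * K)"
  proof -
    fix i assume "i < k"
    have "\<rho> i \<le> 9/16 * (M * lam i)" using IH2[OF \<open>i < k\<close>] by simp
    also have "\<dots> \<le> 9/16 * (1 / (8 * K))" using Mlam[of i] \<open>i < k\<close> by simp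
    finally show "\<rho> i \<le> 9 / (128 * K)" by simp
  qed
  have rm: "\<rho>m k \<le> 9 / (128 * K)"
    using rb9[of "k - 1"] K1 by (cases k) (auto simp: \<rho>m_def)
  have rm8: "\<rho>m k \<le> 1/8"
  proof -
    have "9 / (128 * K) \<le> 9 / 128" using K1 by (intro divide_left_mono) auto
    then show ?thesis using rm by simp
  qed
  have rk: "\<rho> k \<le> 9/16 * M * lam k"
  proof -
    have "\<rho> k = M * r k / 2" by (simp add: \<rho>_def)
    also have "\<dots> \<le> M * ((1 + \<rho>m k) * lam k) / 2"
      using lin_k(1)[of k] M0 by (intro divide_right_mono mult_left_mono) auto
    also have "\<dots> \<le> M * ((9/8) * lam k) / 2"
      using rm8 M0 lam_nonneg[of k] by (intro divide_right_mono mult_left_mono mult_right_mono) auto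
    finally show ?thesis by simp
  qed
  have rk9: "\<rho> k \<le> 9 / (128 * K)"
  proof -
    have "\<rho> k \<le> 9/16 * (M * lam k)" using rk by simp
    also have "\<dots> \<le> 9/16 * (1 / (8 * K))" using Mlam[of k] by simp
    finally show ?thesis by simp
  qed
  have sumr: "(\<Sum>i<k. \<rho> i) \<le> 9/64"
  proof -
    have "(\<Sum>i<k. \<rho> i) \<le> (\<Sum>i<k. 9/16 * M * lam i)" by (rule sum_mono) (use IH2 in simp)
    also have "\<dots> \<le> (\<Sum>i<k. 9/16 * M * (q^i * lam 0))"
      by (rule sum_mono) (use IH1 M0 in \<open>auto intro!: mult_left_mono\<close>)
    also have "\<dots> = (\<Sum>i<k. q^i * (9/16 * (M * lam 0)))" by (rule sum.cong) (simp_all add: mult_ac)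
    also have "\<dots> = (\<Sum>i<k. q^i) * (9/16 * (M * lam 0))" by (rule sum_distrib_right[symmetric])
    also have "\<dots> = 9/16 * (M * lam 0) * (\<Sum>i<k. q^i)" by (simp add: mult_ac)
    also have "\<dots> \<le> 9/16 * (1 / (8 * K)) * (1 / (1 - q))"
      using geom_sum[OF q0 q1, of k] Mlam[of 0] M0 lam_nonneg[of 0]
      by (intro mult_mono) (use K1 in \<open>auto intro!: sum_nonneg simp: q0\<close>)
    also have "\<dots> = 9/64" using K1 by (simp add: q_def field_simps)
    finally show ?thesis .
  qed
  have Pk: "P k \<le> 32/23"
  proof -
    have "P k \<le> exp (2 * (\<Sum>i<k. \<rho> i))" by (rule P_exp)
    also have "\<dots> \<le> exp (9/32)" using sumr by simp
    also have "\<dots> \<le> 32/23" by (rule exp_small)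
    finally show ?thesis .
  qed
  have fac: "(1 + \<rho> k) * (max (\<rho>m k) (1 - 1/(K * P k)) + \<rho> k * (1 + \<rho>m k)) \<le> q"
    unfolding q_def by (rule lin_factor[OF K1 rho_nonneg rk9 rhom_nonneg rm P_ge1 Pk])
  have "lam (Suc k) \<le> (1 + \<rho> k) * (max (\<rho>m k) (1 - 1/(K * P k)) + \<rho> k * (1 + \<rho>m k)) * lam k"
    using lin_k(2)[of k] by (simp add: K_def)
  also have "\<dots> \<le> q * lam k" by (rule mult_right_mono[OF fac lam_nonneg])
  also have "\<dots> \<le> q * (q^k * lam 0)" by (rule mult_left_mono[OF IH1 q0]) simp
  finally have ls: "lam (Suc k) \<le> q^(Suc k) * lam 0" by (simp add: mult_ac)
  have A: "\<forall>i\<le>Suc k. lam i \<le> q^i * lam 0"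
    using IH1 ls by (auto simp: le_Suc_eq)
  have B: "\<forall>i<Suc k. \<rho> i \<le> 9/16 * M * lam i"
    using IH2 rk by (auto simp: less_Suc_eq)
  show ?case using A B by (simp add: q_def K_def)
qed

end


context sr1s begin

lemma JTk: "qf (Jk k) v \<le> cc k * qf (G k) v"
proof -
  have "qf (Jk k) v \<le> (1 + \<rho> k) * qf (H (x k)) v" by (rule JB1k)
  also have "\<dots> \<le> (1 + \<rho> k) * ((1 + \<rho>m k) * qf (G k) v)"
    by (rule mult_left_mono[OF HGk]) (use rho_nonneg[of k] in simp)
  finally show "qf (Jk k) v \<le> cc k * qf (G k) v" by (simp add: cc_def mult_ac)
qed

definition "th k = (SOME \<theta>. \<theta> \<ge> 0 \<and> sqrt (tau (Suc k)) \<le> sqrt (cc k * tau k) * (\<theta> + (1 - 1/cc k))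
            \<and> det (G (Suc k)) * (1 + \<theta>^2) = det (cc k *\<^sub>R G k))"
definition "eps k = 1 - 1 / cc k"
definition "yv k = (th k + eps k)^2"

lemma th_prop: "th k \<ge> 0 \<and> sqrt (tau (Suc k)) \<le> sqrt (cc k * tau k) * (th k + eps k)
            \<and> det (G (Suc k)) * (1 + (th k)^2) = det (cc k *\<^sub>R G k)"
proof -
  have "\<exists>\<theta>\<ge>0. sqrt (tau (Suc k)) \<le> sqrt (cc k * tau k) * (\<theta> + (1 - 1/cc k))
            \<and> det (G (Suc k)) * (1 + \<theta>^2) = det (cc k *\<^sub>R G k)"
    by (rule sr1k(4)[OF pGk JTk])
  then have "\<exists>\<theta>. \<theta> \<ge> 0 \<and> sqrt (tau (Suc k)) \<le> sqrt (cc k * tau k) * (\<theta> + (1 - 1/cc k))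
            \<and> det (G (Suc k)) * (1 + \<theta>^2) = det (cc k *\<^sub>R G k)" by blast
  from someI_ex[OF this] show ?thesis unfolding th_def[symmetric] eps_def .
qed

lemma eps_bounds: "0 \<le> eps k" "eps k < 1"
  using cc_ge1[of k] by (auto simp: eps_def)

lemma tau_nonneg: "0 \<le> tau k" unfolding tau_def by (rule dq_nonneg[OF pGk])

lemma tau_rec: "tau (Suc k) \<le> cc k * tau k * yv k"
proof -
  have h: "sqrt (tau (Suc k)) \<le> sqrt (cc k * tau k) * (th k + eps k)" using th_prop by blast
  have nn: "0 \<le> sqrt (tau (Suc k))" using tau_nonneg by simp
  have "(sqrt (tau (Suc k)))^2 \<le> (sqrt (cc k * tau k) * (th k + eps k))^2"
    by (rule power_mono[OF h nn])
  also have "\<dots> = cc k * tau k * yv k"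
    using cc_ge1[of k] tau_nonneg[of k] by (simp add: power_mult_distrib yv_def)
  finally show ?thesis using tau_nonneg[of "Suc k"] by simp
qed

lemma yv_nonneg: "0 \<le> yv k" by (simp add: yv_def)

lemma tau_prod: "tau k \<le> tau 0 * P k * (\<Prod>i<k. yv i)"
proof (induction k)
  case 0 then show ?case by (simp add: P_def)
next
  case (Suc k)
  have "tau (Suc k) \<le> cc k * tau k * yv k" by (rule tau_rec)
  also have "\<dots> \<le> cc k * (tau 0 * P k * (\<Prod>i<k. yv i)) * yv k"
    using Suc.IH cc_ge1[of k] yv_nonneg[of k] by (intro mult_right_mono mult_left_mono) auto
  also have "\<dots> = tau 0 * P (Suc k) * (\<Prod>i<Suc k. yv i)" by (simp add: P_Suc mult_ac)
  finally show ?case .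
qed

lemma det_prod: "det (G k) * (\<Prod>i<k. 1 + (th i)^2) = (P k * L) ^ CARD('n)"
proof (induction k)
  case 0 then show ?case by (simp add: G0 det_scaleR P_def)
next
  case (Suc k)
  have "det (G (Suc k)) * (\<Prod>i<Suc k. 1 + (th i)^2)
      = (det (G (Suc k)) * (1 + (th k)^2)) * (\<Prod>i<k. 1 + (th i)^2)" by (simp add: mult_ac)
  also have "\<dots> = det (cc k *\<^sub>R G k) * (\<Prod>i<k. 1 + (th i)^2)" using th_prop by simp
  also have "\<dots> = (cc k) ^ CARD('n) * (det (G k) * (\<Prod>i<k. 1 + (th i)^2))"
    by (simp add: det_scaleR mult_ac)
  also have "\<dots> = (P (Suc k) * L) ^ CARD('n)" using Suc.IH by (simp add: P_Suc power_mult_distrib mult_ac)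
  finally show ?case .
qed

lemma prod_th: "(\<Prod>i<k. 1 + (th i)^2) \<le> (P k * (L / \<mu>) * (1 + \<rho>m k)) ^ CARD('n)"
proof -
  define m where "m = \<mu> / (1 + \<rho>m k)"
  have m0: "0 < m" using mu_pos rhom_nonneg[of k] by (simp add: m_def)
  have dl: "m ^ CARD('n) \<le> det (G k)" unfolding m_def by (rule detlb[OF pGk])
  have dpos: "0 < det (G k)" using dl m0 by (metis zero_less_power order_less_le_trans)
  have "(\<Prod>i<k. 1 + (th i)^2) = (P k * L) ^ CARD('n) / det (G k)"
    using det_prod[of k] dpos by (simp add: field_simps)
  also have "\<dots> \<le> (P k * L) ^ CARD('n) / m ^ CARD('n)"
    by (rule divide_left_mono[OF dl]) (use m0 L_pos P_ge1[of k] dpos in auto)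
  also have "\<dots> = (P k * (L / \<mu>) * (1 + \<rho>m k)) ^ CARD('n)"
  proof -
    have e: "P k * L / m = P k * (L / \<mu>) * (1 + \<rho>m k)"
      using mu_pos rhom_nonneg[of k] by (simp add: m_def field_simps)
    have "(P k * L) ^ CARD('n) / m ^ CARD('n) = (P k * L / m) ^ CARD('n)" by (rule power_divide[symmetric])
    then show ?thesis unfolding e .
  qed
  finally show ?thesis .
qed

lemma one_plus_y: "1 + yv i \<le> (1 + (th i)^2) * (cc i)^2"
proof -
  define t where "t = th i"
  define e where "e = eps i"
  define c where "c = cc i"
  have t0: "0 \<le> t" using th_prop by (simp add: t_def)
  have e0: "0 \<le> e" "e < 1" using eps_bounds by (auto simp: e_def)
  have c1: "1 \<le> c" using cc_ge1 by (simp add: c_def)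
  have a: "1 + (t + e)^2 \<le> (1 + t^2) * (1 + 2 * e)"
  proof -
    have "(1 + t^2) * (1 + 2 * e) - (1 + (t + e)^2) = e * (t^2 + (t - 1)^2 + (1 - e))"
      by (simp add: power2_eq_square algebra_simps)
    moreover have "0 \<le> e * (t^2 + (t - 1)^2 + (1 - e))" using e0 by simp
    ultimately show ?thesis by simp
  qed
  have b: "1 + 2 * e \<le> c^2"
  proof -
    have ee: "e = 1 - 1/c" by (simp add: e_def c_def eps_def)
    have "c * (c^2 - (1 + 2 * e)) = (c - 1)^2 * (c + 2)" using c1
      by (simp add: ee power2_eq_square field_simps)
    moreover have "0 \<le> (c - 1)^2 * (c + 2)" using c1 by simp
    ultimately have "0 \<le> c * (c^2 - (1 + 2 * e))" by simp
    then show ?thesis using c1 by (simp add: zero_le_mult_iff)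
  qed
  have "1 + yv i \<le> (1 + t^2) * (1 + 2 * e)" using a by (simp add: yv_def t_def e_def)
  also have "\<dots> \<le> (1 + t^2) * c^2" by (rule mult_left_mono[OF b]) simp
  finally show ?thesis by (simp add: t_def c_def)
qed

lemma E_bound: "(\<Prod>i<k. 1 + yv i) \<le> (P k * (L / \<mu>) * (1 + \<rho>m k)) ^ CARD('n) * (P k)^2"
proof -
  have "(\<Prod>i<k. 1 + yv i) \<le> (\<Prod>i<k. (1 + (th i)^2) * (cc i)^2)"
    by (rule prod_mono) (use one_plus_y yv_nonneg in \<open>auto intro: add_nonneg_nonneg\<close>)
  also have "\<dots> = (\<Prod>i<k. 1 + (th i)^2) * (P k)^2"
    by (simp add: prod.distrib P_def prod_power_distrib)
  also have "\<dots> \<le> (P k * (L / \<mu>) * (1 + \<rho>m k)) ^ CARD('n) * (P k)^2"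
    by (rule mult_right_mono[OF prod_th]) simp
  finally show ?thesis .
qed

lemma tau0_le: "tau 0 \<le> (lam 0)^2"
proof -
  have pG0: "pdm L (G 0)" using L_pos by (simp add: G0 pdm_def)
  have "dq (G 0) (g (x 0)) \<le> dq (H (x 0)) (g (x 0))"
    by (rule dq_mono[OF pH pG0]) (simp add: G0 upH)
  then show ?thesis using dq_nonneg[OF pH] by (simp add: tau_def lam_def)
qed

lemma lam_tau: "(lam k)^2 \<le> (L / \<mu> * P k) * tau k"
proof -
  have "dq (H (x k)) (g (x k)) \<le> (L / \<mu> * P k) * dq (G k) (g (x k))"
    by (rule dq_le_scaled[OF pGk pH _ GHk]) (use eta_ge1[of k] in simp)
  then show ?thesis using dq_nonneg[OF pH] by (simp add: tau_def lam_def)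
qed

end


context sr1s begin

lemma nd_lam: "newton_decr g H (x k) = lam k"
  by (simp add: newton_decr_def lam_def dq_def)

lemma bounds_after:
  assumes init': "M * lam 0 \<le> 1 / (8 * (L / \<mu>))" and k: "1 \<le> k"
  shows "\<rho>m k \<le> 9 / (128 * (L / \<mu>))" and "P k \<le> 32/23"
proof -
  define K where "K = L / \<mu>"
  define q where "q = 1 - 1/(2 * K)"
  have K1: "1 \<le> K" using K_ge1 by (simp add: K_def)
  have q0: "0 \<le> q" and q1: "q < 1" using K1 by (auto simp: q_def)
  have LP: "(\<forall>i\<le>k. lam i \<le> q^i * lam 0) \<and> (\<forall>i<k. \<rho> i \<le> 9/16 * M * lam i)"
    using linear_phase[OF init', of k] by (simp add: q_def K_def)
  have IH1: "\<And>i. i \<le> k \<Longrightarrow> lam i \<le> q^i * lam 0" using LP by simp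
  have IH2: "\<And>i. i < k \<Longrightarrow> \<rho> i \<le> 9/16 * M * lam i" using LP by simp
  have Mlam: "\<And>i. i \<le> k \<Longrightarrow> M * lam i \<le> 1 / (8 * K)"
  proof -
    fix i assume "i \<le> k"
    have "lam i \<le> q^i * lam 0" using IH1 \<open>i \<le> k\<close> .
    also have "\<dots> \<le> 1 * lam 0" using q0 q1 lam_nonneg[of 0] by (intro mult_right_mono power_le_one) auto
    finally have "M * lam i \<le> M * lam 0" using M0 by (simp add: mult_left_mono)
    then show "M * lam i \<le> 1 / (8 * K)" using init' by (simp add: K_def)
  qed
  have "\<rho> (k - 1) \<le> 9/16 * (M * lam (k - 1))" using IH2[of "k - 1"] k by simp
  also have "\<dots> \<le> 9/16 * (1 / (8 * K))" using Mlam[of "k - 1"] by simp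
  finally show "\<rho>m k \<le> 9 / (128 * (L / \<mu>))" using k by (simp add: \<rho>m_def K_def)
  have sumr: "(\<Sum>i<k. \<rho> i) \<le> 9/64"
  proof -
    have "(\<Sum>i<k. \<rho> i) \<le> (\<Sum>i<k. 9/16 * M * lam i)" by (rule sum_mono) (use IH2 in simp)
    also have "\<dots> \<le> (\<Sum>i<k. 9/16 * M * (q^i * lam 0))"
      by (rule sum_mono) (use IH1 M0 in \<open>auto intro!: mult_left_mono\<close>)
    also have "\<dots> = (\<Sum>i<k. q^i * (9/16 * (M * lam 0)))" by (rule sum.cong) (simp_all add: mult_ac)
    also have "\<dots> = (\<Sum>i<k. q^i) * (9/16 * (M * lam 0))" by (rule sum_distrib_right[symmetric])
    also have "\<dots> = 9/16 * (M * lam 0) * (\<Sum>i<k. q^i)" by (simp add: mult_ac)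
    also have "\<dots> \<le> 9/16 * (1 / (8 * K)) * (1 / (1 - q))"
      using geom_sum[OF q0 q1, of k] Mlam[of 0] M0 lam_nonneg[of 0]
      by (intro mult_mono) (use K1 in \<open>auto intro!: sum_nonneg simp: q0\<close>)
    also have "\<dots> = 9/64" using K1 by (simp add: q_def field_simps)
    finally show ?thesis .
  qed
  have "P k \<le> exp (2 * (\<Sum>i<k. \<rho> i))" by (rule P_exp)
  also have "\<dots> \<le> exp (9/32)" using sumr by simp
  also have "\<dots> \<le> 32/23" by (rule exp_small)
  finally show "P k \<le> 32/23" .
qed

lemma final_bound:
  assumes init: "M * newton_decr g H (x 0) \<le> ln (3 / 2) / (4 * (L / \<mu>))"
  shows "\<forall>k\<ge>1. newton_decr g H (x k) \<le>
     (exp (2 * real CARD('n) * ln (exp 1 * (L / \<mu>)) / real k) - 1) powr (real k / 2)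
       * sqrt (3 * (L / \<mu>)) * newton_decr g H (x 0)"
proof (intro allI impI)
  fix k :: nat assume k: "1 \<le> k"
  define K where "K = L / \<mu>"
  define n where "n = CARD('n)"
  have K1: "1 \<le> K" using K_ge1 by (simp add: K_def)
  have n1: "1 \<le> n" by (simp add: n_def)
  have init': "M * lam 0 \<le> 1 / (8 * (L / \<mu>))"
  proof -
    have "ln (3/2 :: real) \<le> 3/2 - 1" by (rule ln_le_minus_one) simp
    then have "ln (3/2 :: real) / (4 * K) \<le> (1/2) / (4 * K)" using K1 by (intro divide_right_mono) auto
    then show ?thesis using init by (simp add: nd_lam K_def)
  qed
  have rmk: "\<rho>m k \<le> 9 / (128 * K)" using bounds_after(1)[OF init' k] by (simp add: K_def)
  have Pk: "P k \<le> 32/23" by (rule bounds_after(2)[OF init' k])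
  have P1: "1 \<le> P k" by (rule P_ge1)
  have e2: "2 \<le> exp (1::real)" using exp_ge_add_one_self[of "1::real"] by simp
  define E where "E = (\<Prod>i<k. 1 + yv i)"
  have E1: "1 \<le> E" unfolding E_def by (rule prod_ge_1) (use yv_nonneg in simp)
  have Eb: "E \<le> (exp 1 * K) ^ (2 * n)"
  proof -
    have "E \<le> (P k * K * (1 + \<rho>m k)) ^ n * (P k)^2"
      using E_bound[of k] by (simp add: E_def K_def n_def)
    also have "\<dots> \<le> (exp 1 * K) ^ n * (exp 1 * K) ^ n"
    proof (rule mult_mono)
      have "P k * (1 + \<rho>m k) \<le> 32/23 * (1 + 9/128)"
      proof (rule mult_mono[OF Pk])
        have "9 / (128 * K) \<le> 9/128" using K1 by (intro divide_left_mono) auto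
        then show "1 + \<rho>m k \<le> 1 + 9/128" using rmk by simp
      qed (use rhom_nonneg[of k] in auto)
      also have "\<dots> \<le> exp 1" using e2 by simp
      finally have "P k * K * (1 + \<rho>m k) \<le> exp 1 * K" using K1 by (simp add: mult_ac mult_right_mono)
      then show "(P k * K * (1 + \<rho>m k)) ^ n \<le> (exp 1 * K) ^ n"
        by (rule power_mono) (use P1 K1 rhom_nonneg[of k] in simp)
      have "(P k)^2 \<le> (32/23)^2" by (rule power_mono[OF Pk]) (use P1 in simp)
      also have "\<dots> \<le> exp 1"
      proof -
        have "(32/23::real)^2 \<le> 2" by (simp add: power2_eq_square)
        then show ?thesis using e2 by linarith
      qed
      also have "\<dots> \<le> exp 1 * K" using K1 by simp
      also have "\<dots> \<le> (exp 1 * K) ^ n"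
      proof -
        have "1 \<le> exp 1 * K" using e2 K1 by (metis mult_mono' one_le_numeral order_trans mult_1_left zero_le_one)
        then show ?thesis using n1 by (metis power_increasing power_one_right)
      qed
      finally show "(P k)^2 \<le> (exp 1 * K) ^ n" .
    qed (use K1 in auto)
    also have "\<dots> = (exp 1 * K) ^ (2 * n)" by (simp add: power_add[symmetric] mult_2)
    finally show ?thesis .
  qed
  have lnE: "ln E \<le> 2 * real n * ln (exp 1 * K)"
  proof -
    have "ln E \<le> ln ((exp 1 * K) ^ (2 * n))" using Eb E1 by simp
    also have "\<dots> = 2 * real n * ln (exp 1 * K)" using K1 by (simp add: ln_realpow)
    finally show ?thesis .
  qed
  define X where "X = exp (2 * real n * ln (exp 1 * K) / real k) - 1"
  have Xpos: "0 < X"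
  proof -
    have l0: "0 \<le> ln K" using K1 by simp
    have "ln (exp 1 * K) = 1 + ln K" using K1 by (simp add: ln_mult)
    then have "0 < ln (exp 1 * K)" using l0 by linarith
    then have "0 < 2 * real n * ln (exp 1 * K) / real k" using n1 k by simp
    then show ?thesis by (simp add: X_def)
  qed
  have am: "(\<Prod>i<k. yv i) \<le> (E powr (1 / real k) - 1) ^ k"
    unfolding E_def by (rule amgm_special[OF k yv_nonneg])
  have Ek: "E powr (1 / real k) - 1 \<le> X"
  proof -
    have "E powr (1 / real k) = exp (ln E / real k)" using E1 by (simp add: powr_def)
    also have "\<dots> \<le> exp (2 * real n * ln (exp 1 * K) / real k)"
      using lnE k by (simp add: divide_right_mono)
    finally show ?thesis by (simp add: X_def)
  qed
  have Ek0: "0 \<le> E powr (1 / real k) - 1" using E1 by (simp add: ge_one_powr_ge_zero)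
  have prodY: "(\<Prod>i<k. yv i) \<le> X ^ k"
    using am power_mono[OF Ek Ek0, of k] by simp
  have Y0: "0 \<le> (\<Prod>i<k. yv i)" by (rule prod_nonneg) (use yv_nonneg in simp)
  have "(lam k)^2 \<le> (K * P k) * tau k" using lam_tau[of k] by (simp add: K_def)
  also have "\<dots> \<le> (K * P k) * (tau 0 * P k * (\<Prod>i<k. yv i))"
    by (rule mult_left_mono[OF tau_prod]) (use K1 P1 in simp)
  also have "\<dots> = K * (P k)^2 * tau 0 * (\<Prod>i<k. yv i)" by (simp add: power2_eq_square mult_ac)
  also have "\<dots> \<le> K * 3 * (lam 0)^2 * X ^ k"
  proof (intro mult_mono)
    have "(P k)^2 \<le> (32/23)^2" by (rule power_mono[OF Pk]) (use P1 in simp)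
    moreover have "(32/23::real)^2 \<le> 3" by (simp add: power2_eq_square)
    ultimately show "(P k)^2 \<le> 3" by linarith
  qed (use K1 tau0_le tau_nonneg[of 0] prodY Y0 in auto)
  finally have sq: "(lam k)^2 \<le> (sqrt (3 * K) * lam 0 * sqrt (X ^ k))^2"
    using K1 Xpos lam_nonneg[of 0] by (simp add: power_mult_distrib mult_ac)
  have lk: "lam k \<le> sqrt (3 * K) * lam 0 * sqrt (X ^ k)"
    using power2_le_imp_le[OF sq] K1 Xpos lam_nonneg[of 0] by simp
  have sX: "sqrt (X ^ k) = X powr (real k / 2)"
  proof -
    have "sqrt (X ^ k) = (X powr real k) powr (1/2)"
      using Xpos by (simp add: powr_realpow powr_half_sqrt)
    also have "\<dots> = X powr (real k / 2)" by (simp add: powr_powr)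
    finally show ?thesis .
  qed
  show "newton_decr g H (x k) \<le>
     (exp (2 * real CARD('n) * ln (exp 1 * (L / \<mu>)) / real k) - 1) powr (real k / 2)
       * sqrt (3 * (L / \<mu>)) * newton_decr g H (x 0)"
    using lk unfolding nd_lam sX by (simp add: X_def K_def n_def mult_ac)
qed

end

theorem theorem4:
  fixes f :: "real^'n \<Rightarrow> real"
    and g :: "real^'n \<Rightarrow> real^'n"
    and H :: "real^'n \<Rightarrow> real^'n^'n"
    and \<mu> L M :: real
    and x :: "nat \<Rightarrow> real^'n"
    and G :: "nat \<Rightarrow> real^'n^'n"
    and r :: "nat \<Rightarrow> real"
  assumes grad: "\<And>y. (f has_derivative (\<lambda>h. g y \<bullet> h)) (at y)"
    and hess: "\<And>y. (g has_derivative (\<lambda>h. H y *v h)) (at y)"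
    and mu_pos: "0 < \<mu>" and mu_le_L: "\<mu> \<le> L"
    and bounds: "\<And>y. loewner_le (\<mu> *\<^sub>R mat 1) (H y) \<and> loewner_le (H y) (L *\<^sub>R mat 1)"
    and ssc: "strongly_self_concordant H M"
    and G0: "G 0 = L *\<^sub>R mat 1"
    and x_step: "\<And>k. x (Suc k) = x k - matrix_inv (G k) *v g (x k)"
    and r_def: "\<And>k. r k = local_norm H (x k) (x (Suc k) - x k)"
    and G_step: "\<And>k. G (Suc k) =
        SR1 (integral {0..1} (\<lambda>t. H (x k + t *\<^sub>R (x (Suc k) - x k))))
            (((1 + M * (if k = 0 then 0 else r (k - 1)) / 2) * (1 + M * r k / 2)) *\<^sub>R G k)
            (x (Suc k) - x k)"
    and init: "M * newton_decr g H (x 0) \<le> ln (3 / 2) / (4 * (L / \<mu>))"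
  shows "\<forall>k\<ge>1. newton_decr g H (x k) \<le>
     (exp (2 * real CARD('n) * ln (exp 1 * (L / \<mu>)) / real k) - 1) powr (real k / 2)
       * sqrt (3 * (L / \<mu>)) * newton_decr g H (x 0)"
proof -
  interpret sr1s f g H \<mu> L M x G r
    by (rule sr1s.intro) (fact grad hess mu_pos mu_le_L bounds ssc G0 x_step r_def G_step)+
  show ?thesis by (rule final_bound[OF init])
qed


end
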